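(* Let $n>1$. Then $$\sum_{T \in \mathcal{C}_{n+1}} y^{\mathrm{impe}(T)} (t+1)^{\mathrm{impp}(T)} x^{\deg_T(1)-1} z^{\mathrm{lead}(T)-\deg_T(1)-1} = \sum_{T \in \mathcal{O}_{n+1}} y^{\mathrm{impe}(T)+\mathrm{eld}(T)}\, t^{\mathrm{eld}(T)}\, x^{\mathrm{young}_T(1)-1}\, z^{n-\mathrm{impe}(T) - \mathrm{young}_T(1) - \mathrm{eld}(T)}.$$
   Context: $\mathcal{C}_m$ is the set of Cayley trees on $[m]$ rooted at $1$, and $\mathcal{O}_m$ is the set of planar trees (rooted labelled trees in which the children of each vertex are linearly ordered, left to right) with vertex set labelled bijectively by $[m]$, rooted at $1$. Edges are oriented from parent to child; $\lambda_T$ is the label and $\beta_T(v)$ the smallest label among descendants of $v$ ($v$ included). For Cayley trees: an edge $(i,j)$ is improper if $\lambda_T(i)>\beta_T(j)$; $\mathrm{impe}(T)$ = number of improper edges; a vertex is an improper parent if it has an improper child, $\mathrm{impp}(T)$ = number of improper parents; $\deg_T(1)$ = degree of the root; for a vertex $i$ with root-to-$i$ path $(1=a_0,\dots,a_k=i)$, its greater ancestors path is the longest suffix $(a_p,\dots,a_k)$ whose vertices $j$ all satisfy $\lambda_T(j)\ge\lambda_T(i)$, $i$ is leading if $\beta_T(a_p)=\lambda_T(i)$, and $\mathrm{lead}(T)$ = number of leading vertices. For planar trees: a vertex $j$ is elder if it has a sibling $k$ to its right with $\beta_T(k)<\beta_T(j)$, and younger otherwise; $\mathrm{eld}(T)$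 = number of elder vertices; $\mathrm{young}_T(1)$ = number of younger children of the root $1$; an edge $(i,j)$ is improper if $j$ is a younger child of $i$ and $\lambda_T(i)>\beta_T(j)$; $\mathrm{impe}(T)$ = number of improper edges. *)

theory Defs
  imports Main
begin

text \<open>Rooted trees on vertex set [m] = {1..m}, rooted at 1, labels = vertices.
A tree is encoded by its parent function par: par v is the parent of v for
v in {2..m}; par is 0 outside {2..m} (canonical encoding, so 0 serves as a
sentinel above the root).\<close>

definition is_cayley :: "nat \<Rightarrow> (nat \<Rightarrow> nat) \<Rightarrow> bool" where
  "is_cayley m par \<longleftrightarrow>
     (\<forall>v\<in>{2..m}. par v \<in> {1..m}) \<and>
     (\<forall>v. v \<notin> {2..m} \<longrightarrow> par v = 0) \<and>
     (\<forall>v\<in>{1..m}. \<exists>k. (par ^^ k) v = 1)"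

definition cayley_trees :: "nat \<Rightarrow> (nat \<Rightarrow> nat) set" where
  "cayley_trees m = {par. is_cayley m par}"

definition desc :: "(nat \<Rightarrow> nat) \<Rightarrow> nat \<Rightarrow> nat \<Rightarrow> bool" where
  "desc par u v \<longleftrightarrow> (\<exists>k. (par ^^ k) u = v)"

definition beta :: "nat \<Rightarrow> (nat \<Rightarrow> nat) \<Rightarrow> nat \<Rightarrow> nat" where
  "beta m par v = Min {u\<in>{1..m}. desc par u v}"

definition impe_C :: "nat \<Rightarrow> (nat \<Rightarrow> nat) \<Rightarrow> nat" where
  "impe_C m par = card {j\<in>{2..m}. par j > beta m par j}"

definition impp_C :: "nat \<Rightarrow> (nat \<Rightarrow> nat) \<Rightarrow> nat" where
  "impp_C m par = card {i\<in>{1..m}. \<exists>j\<in>{2..m}. par j = i \<and> i > beta m par j}"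

definition deg_root :: "nat \<Rightarrow> (nat \<Rightarrow> nat) \<Rightarrow> nat" where
  "deg_root m par = card {j\<in>{2..m}. par j = 1}"

text \<open>Top vertex a_p of the greater ancestors path of i: the farthest ancestor
reached from i such that all vertices from i up to it have label \<ge> i
(the sentinel 0 above the root guarantees this is well defined).\<close>
definition gap_top :: "(nat \<Rightarrow> nat) \<Rightarrow> nat \<Rightarrow> nat" where
  "gap_top par i = (par ^^ (GREATEST k. \<forall>k'\<le>k. (par ^^ k') i \<ge> i)) i"

definition leading :: "nat \<Rightarrow> (nat \<Rightarrow> nat) \<Rightarrow> nat \<Rightarrow> bool" where
  "leading m par i \<longleftrightarrow> beta m par (gap_top par i) = i"

definition lead :: "nat \<Rightarrow> (nat \<Rightarrow> nat) \<Rightarrow> nat" where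
  "lead m par = card {i\<in>{1..m}. leading m par i}"

text \<open>Planar trees: a Cayley tree par together with, for each vertex v,
the list ord v of its children ordered left to right (ord v = [] outside [m]).\<close>
definition planar_trees :: "nat \<Rightarrow> ((nat \<Rightarrow> nat) \<times> (nat \<Rightarrow> nat list)) set" where
  "planar_trees m = {(par, ord). is_cayley m par \<and>
      (\<forall>v\<in>{1..m}. distinct (ord v) \<and> set (ord v) = {j\<in>{2..m}. par j = v}) \<and>
      (\<forall>v. v \<notin> {1..m} \<longrightarrow> ord v = [])}"

definition elder :: "nat \<Rightarrow> (nat \<Rightarrow> nat) \<Rightarrow> (nat \<Rightarrow> nat list) \<Rightarrow> nat \<Rightarrow> bool" where
  "elder m par ord j \<longleftrightarrow> j \<in> {2..m} \<and>
     (\<exists>a b. a < b \<and> b < length (ord (par j)) \<and> ord (par j) ! a = j \<and>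
            beta m par (ord (par j) ! b) < beta m par j)"

definition younger :: "nat \<Rightarrow> (nat \<Rightarrow> nat) \<Rightarrow> (nat \<Rightarrow> nat list) \<Rightarrow> nat \<Rightarrow> bool" where
  "younger m par ord j \<longleftrightarrow> j \<in> {2..m} \<and> \<not> elder m par ord j"

definition eld :: "nat \<Rightarrow> (nat \<Rightarrow> nat) \<Rightarrow> (nat \<Rightarrow> nat list) \<Rightarrow> nat" where
  "eld m par ord = card {j\<in>{1..m}. elder m par ord j}"

definition young_root :: "nat \<Rightarrow> (nat \<Rightarrow> nat) \<Rightarrow> (nat \<Rightarrow> nat list) \<Rightarrow> nat" where
  "young_root m par ord = card {j\<in>{2..m}. par j = 1 \<and> younger m par ord j}"

definition impe_O :: "nat \<Rightarrow> (nat \<Rightarrow> nat) \<Rightarrow> (nat \<Rightarrow> nat list) \<Rightarrow> nat" where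
  "impe_O m par ord = card {j\<in>{2..m}. younger m par ord j \<and> par j > beta m par j}"

end

theory Submission
  imports Defs "HOL-Library.Product_Lexorder"
begin


locale ctree =
  fixes m :: nat and par :: "nat \<Rightarrow> nat"
  assumes cay: "is_cayley m par"
begin

lemma par_in: "v \<in> {2..m} \<Longrightarrow> par v \<in> {1..m}"
  using cay unfolding is_cayley_def by blast

lemma par_out: "v \<notin> {2..m} \<Longrightarrow> par v = 0"
  using cay unfolding is_cayley_def by blast

lemma par0[simp]: "par 0 = 0" by (rule par_out) auto
lemma par1[simp]: "par 1 = 0" by (rule par_out) auto
lemma par_Suc0[simp]: "par (Suc 0) = 0" by (rule par_out) auto

lemma reach: "v \<in> {1..m} \<Longrightarrow> \<exists>k. (par ^^ k) v = 1"
  using cay unfolding is_cayley_def by blast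

lemma funpow0[simp]: "(par ^^ k) 0 = 0"
  by (induction k) auto

lemma par_le: "par w \<le> m"
  using par_in[of w] par_out[of w] by (cases "w \<in> {2..m}") auto

lemma funpow_range: "v \<le> m \<Longrightarrow> (par ^^ k) v \<le> m"
  by (induction k) (auto simp: par_le)

lemma funpow_after_root: "(par ^^ k) v = 1 \<Longrightarrow> (par ^^ (k + Suc j)) v = 0"
proof (induction j)
  case 0 then show ?case by simp
next
  case (Suc j) then show ?case by simp
qed

lemma acyclic: assumes "v \<ge> 1" "(par ^^ k) v = v" shows "k = 0"
proof (rule ccontr)
  assume "k \<noteq> 0"
  obtain k' where k': "k = Suc k'" using \<open>k \<noteq> 0\<close> by (cases k) auto
  have pv: "(par ^^ k) v = (par ^^ k') (par v)" unfolding k' funpow_Suc_right by simp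
  have vm: "v \<le> m"
  proof (rule ccontr)
    assume "\<not> v \<le> m"
    then have "par v = 0" using par_out by auto
    then show False using pv assms by simp
  qed
  then obtain K where K: "(par ^^ K) v = 1" using reach assms(1) by auto
  have per: "(par ^^ (k * j)) v = v" for j
  proof (induction j)
    case (Suc j)
    have "(par ^^ (k * Suc j)) v = (par ^^ k) ((par ^^ (k * j)) v)"
      by (simp add: funpow_add)
    then show ?case using Suc assms by simp
  qed simp
  have "k * Suc K \<ge> K + 1" using \<open>k \<noteq> 0\<close> by (cases k) auto
  then have "k * Suc K = K + Suc (k * Suc K - K - 1)" by linarith
  then obtain j where "k * Suc K = K + Suc j" by blast
  then have "(par ^^ (k * Suc K)) v = 0" using funpow_after_root[OF K] by simp
  then show False using per[of "Suc K"] assms by simp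
qed

lemma desc_refl[simp]: "desc par v v"
  unfolding desc_def by (metis funpow_0)

lemma desc_trans: "desc par u v \<Longrightarrow> desc par v w \<Longrightarrow> desc par u w"
  unfolding desc_def
proof (elim exE)
  fix a b assume "(par ^^ a) u = v" "(par ^^ b) v = w"
  then have "(par ^^ (b + a)) u = w" by (simp add: funpow_add)
  then show "\<exists>k. (par ^^ k) u = w" by blast
qed

lemma desc_par: "desc par u (par u)"
  unfolding desc_def by (rule exI[of _ 1]) simp

lemma desc_antisym: "u \<ge> 1 \<Longrightarrow> desc par u v \<Longrightarrow> desc par v u \<Longrightarrow> u = v"
  unfolding desc_def
proof (elim exE)
  fix a b assume u: "u \<ge> 1" and a: "(par ^^ a) u = v" and b: "(par ^^ b) v = u"
  then have "(par ^^ (b + a)) u = u" by (simp add: funpow_add)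
  then have "b + a = 0" using acyclic u by blast
  then show "u = v" using a by simp
qed

lemma desc_step: "desc par u v \<Longrightarrow> u \<noteq> v \<Longrightarrow> desc par (par u) v"
  unfolding desc_def
proof (elim exE)
  fix k assume k: "(par ^^ k) u = v" and ne: "u \<noteq> v"
  then obtain k' where "k = Suc k'" by (cases k) auto
  then have "(par ^^ k') (par u) = v" using k by (simp add: funpow_Suc_right del: funpow.simps)
  then show "\<exists>k. (par ^^ k) (par u) = v" by blast
qed

lemma desc_linear: "desc par u a \<Longrightarrow> desc par u b \<Longrightarrow> desc par a b \<or> desc par b a"
  unfolding desc_def
proof (elim exE)
  fix ka kb assume a: "(par ^^ ka) u = a" and b: "(par ^^ kb) u = b"
  show "(\<exists>k. (par ^^ k) a = b) \<or> (\<exists>k. (par ^^ k) b = a)"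
  proof (cases "ka \<le> kb")
    case True
    then have "kb = (kb - ka) + ka" by simp
    then have "(par ^^ kb) u = (par ^^ (kb - ka)) ((par ^^ ka) u)"
      by (metis funpow_add comp_apply)
    then have "(par ^^ (kb - ka)) a = b" using a b by simp
    then show ?thesis by blast
  next
    case False
    then have "ka = (ka - kb) + kb" by simp
    then have "(par ^^ ka) u = (par ^^ (ka - kb)) ((par ^^ kb) u)"
      by (metis funpow_add comp_apply)
    then have "(par ^^ (ka - kb)) b = a" using a b by simp
    then show ?thesis by blast
  qed
qed

lemma desc_root: "u \<in> {1..m} \<Longrightarrow> desc par u 1"
  unfolding desc_def using reach by blast

lemma desc_range: "desc par u v \<Longrightarrow> u \<le> m \<Longrightarrow> v \<le> m"
  unfolding desc_def using funpow_range by blast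

lemma desc_pos: "desc par u v \<Longrightarrow> v \<ge> 1 \<Longrightarrow> u \<ge> 1"
  unfolding desc_def by (cases "u = 0") auto

lemma desc_0: "desc par 0 v \<Longrightarrow> v = 0"
  unfolding desc_def by auto

lemma par_neq: "v \<ge> 1 \<Longrightarrow> par v \<noteq> v"
  using acyclic[of v 1] by auto

lemma par_not_desc:
  assumes "b \<in> {2..m}" shows "\<not> desc par (par b) b"
proof
  assume "desc par (par b) b"
  moreover have "desc par b (par b)" by (rule desc_par)
  moreover have "par b \<ge> 1" using par_in[OF assms] by auto
  ultimately have "par b = b" using desc_antisym by blast
  then show False using par_neq[of b] assms by auto
qed

lemma siblings_disjoint:
  assumes "a \<in> {2..m}" "b \<in> {2..m}" "par a = par b" "a \<noteq> b" "desc par u a" "desc par u b"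
  shows False
proof -
  from desc_linear[OF assms(5,6)] show False
  proof
    assume "desc par a b"
    then have "desc par (par a) b" using desc_step assms(4) by blast
    then show False using par_not_desc[OF assms(2)] assms(3) by simp
  next
    assume "desc par b a"
    then have "desc par (par b) a" using desc_step assms(4) by blast
    then show False using par_not_desc[OF assms(1)] assms(3) by simp
  qed
qed

definition dset where "dset v = {u\<in>{1..m}. desc par u v}"

lemma finite_dset: "finite (dset v)" unfolding dset_def by auto

lemma beta_props:
  assumes "v \<in> {1..m}"
  shows "beta m par v \<in> {1..m}" "desc par (beta m par v) v"
        "\<And>u. u \<in> {1..m} \<Longrightarrow> desc par u v \<Longrightarrow> beta m par v \<le> u"
proof -
  have ne: "{u\<in>{1..m}. desc par u v} \<noteq> {}" using assms by auto
  have fin: "finite {u\<in>{1..m}. desc par u v}" by auto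
  have "beta m par v \<in> {u\<in>{1..m}. desc par u v}"
    unfolding beta_def using Min_in[OF fin ne] .
  then show "beta m par v \<in> {1..m}" "desc par (beta m par v) v" by auto
  show "\<And>u. u \<in> {1..m} \<Longrightarrow> desc par u v \<Longrightarrow> beta m par v \<le> u"
    unfolding beta_def using fin by (simp add: Min_le)
qed

lemma beta_le: "v \<in> {1..m} \<Longrightarrow> beta m par v \<le> v"
  using beta_props(3)[of v v] by auto

lemma beta_sib_neq:
  assumes "a \<in> {2..m}" "b \<in> {2..m}" "par a = par b" "a \<noteq> b"
  shows "beta m par a \<noteq> beta m par b"
  using beta_props(2)[of a] beta_props(2)[of b] siblings_disjoint[OF assms] assms by fastforce

lemma desc_in: "desc par u v \<Longrightarrow> u \<in> {1..m} \<Longrightarrow> v \<ge> 1 \<Longrightarrow> v \<in> {1..m}"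
  using desc_range by auto

lemma desc_parent: "v \<in> {2..m} \<Longrightarrow> desc par u v \<Longrightarrow> desc par u (par v)"
  using desc_trans desc_par by blast

lemma desc_in_rev: assumes "desc par u v" "v \<in> {1..m}" shows "u \<in> {1..m}"
proof -
  obtain k where k: "(par ^^ k) u = v" using assms unfolding desc_def by blast
  have "u \<ge> 1" using desc_pos assms by auto
  moreover have "u \<le> m"
  proof (rule ccontr)
    assume "\<not> u \<le> m"
    then have p: "par u = 0" using par_out by auto
    show False
    proof (cases k)
      case 0 then show False using k assms \<open>\<not> u \<le> m\<close> by auto
    next
      case (Suc k') then show False using k p assms by (simp add: funpow_Suc_right del: funpow.simps)
    qed
  qed
  ultimately show ?thesis by auto
qed

definition dep where "dep v = (LEAST k. (par ^^ k) v = 1)"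

lemma dep_props: "v \<in> {1..m} \<Longrightarrow> (par ^^ dep v) v = 1"
  unfolding dep_def using reach by (meson LeastI_ex)

lemma dep_unique: assumes "(par ^^ k) v = 1" "v \<in> {1..m}" shows "k = dep v"
proof -
  note v = assms(2)
  have d: "(par ^^ dep v) v = 1" using dep_props[OF v] .
  have le: "dep v \<le> k" unfolding dep_def using assms(1) by (rule Least_le)
  then have "k = (k - dep v) + dep v" by simp
  then have "(par ^^ (k - dep v)) 1 = 1" using assms d by (metis funpow_add comp_apply)
  then have "k - dep v = 0" using acyclic[of 1 "k - dep v"] by simp
  then show ?thesis using le by simp
qed

lemma dep_par: assumes "v \<in> {2..m}" shows "dep v = Suc (dep (par v))"
proof -
  have "par v \<in> {1..m}" using par_in assms by auto
  then have "(par ^^ dep (par v)) (par v) = 1" by (rule dep_props)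
  then have "(par ^^ Suc (dep (par v))) v = 1" by (simp add: funpow_Suc_right del: funpow.simps)
  moreover have "v \<in> {1..m}" using assms by auto
  ultimately show ?thesis using dep_unique[of "Suc (dep (par v))" v] by simp
qed

lemma dep_desc: assumes "desc par u v" "u \<noteq> v" "v \<in> {1..m}" shows "dep v < dep u"
proof -
  obtain k where k: "(par ^^ k) u = v" using assms unfolding desc_def by blast
  have "(par ^^ (dep v + k)) u = 1" using k dep_props[OF assms(3)] by (simp add: funpow_add)
  moreover have "u \<in> {1..m}" using assms desc_in_rev by blast
  ultimately have "dep u = dep v + k" using dep_unique by metis
  moreover have "k \<noteq> 0"
  proof
    assume "k = 0" then show False using k assms(2) by simp
  qed
  ultimately show ?thesis by simp
qed

lemma beta_desc_le:
  assumes "v \<in> {1..m}" "w \<in> {1..m}" "desc par v w"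
  shows "beta m par w \<le> beta m par v"
  using beta_props[OF assms(1)] beta_props(3)[OF assms(2)] desc_trans assms(3) by blast

lemma beta_eqI:
  assumes "v \<in> {1..m}" "\<And>u. u \<in> {1..m} \<Longrightarrow> desc par u v \<longleftrightarrow> P u"
    "x \<in> {1..m}" "P x" "\<And>u. u \<in> {1..m} \<Longrightarrow> P u \<Longrightarrow> x \<le> u"
  shows "beta m par v = x"
proof -
  have "{u\<in>{1..m}. desc par u v} = {u\<in>{1..m}. P u}" using assms(2) by auto
  then have "beta m par v = Min {u\<in>{1..m}. P u}" unfolding beta_def by simp
  also have "\<dots> = x" by (rule Min_eqI) (use assms in auto)
  finally show ?thesis .
qed

end


locale planar = ctree +
  fixes ord :: "nat \<Rightarrow> nat list"
  assumes ord_dist: "v \<in> {1..m} \<Longrightarrow> distinct (ord v)"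
    and ord_set: "v \<in> {1..m} \<Longrightarrow> set (ord v) = {j\<in>{2..m}. par j = v}"
    and ord_out: "v \<notin> {1..m} \<Longrightarrow> ord v = []"
begin

abbreviation B where "B \<equiv> beta m par"

definition pos where "pos j = (THE i. i < length (ord (par j)) \<and> ord (par j) ! i = j)"

definition EL where "EL v i \<longleftrightarrow> (\<exists>b. i < b \<and> b < length (ord v) \<and> B (ord v ! b) < B (ord v ! i))"

definition nh where "nh j \<longleftrightarrow> j \<in> {2..m} \<and> 0 < pos j \<and> EL (par j) (pos j - 1)"

definition parN where "parN j = (if nh j then ord (par j) ! (pos j - 1) else par j)"

definition tp where "tp v i = (LEAST b. i \<le> b \<and> b < length (ord v) \<and> \<not> EL v b)"

lemma L_in: assumes "v \<in> {1..m}" "i < length (ord v)"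
  shows "ord v ! i \<in> {2..m}" "par (ord v ! i) = v"
proof -
  have "ord v ! i \<in> set (ord v)" using assms by simp
  then show "ord v ! i \<in> {2..m}" "par (ord v ! i) = v" using ord_set[OF assms(1)] by auto
qed

lemma len_out: "v \<notin> {1..m} \<Longrightarrow> length (ord v) = 0"
  using ord_out by simp

lemma pos_nth: assumes "i < length (ord v)" shows "pos (ord v ! i) = i"
proof -
  have v: "v \<in> {1..m}" using assms len_out by (cases "v \<in> {1..m}") auto
  have p: "par (ord v ! i) = v" using L_in[OF v assms] by simp
  show ?thesis unfolding pos_def p
  proof (rule the_equality)
    show "i < length (ord v) \<and> ord v ! i = ord v ! i" using assms by simp
    fix i' assume "i' < length (ord v) \<and> ord v ! i' = ord v ! i"
    then show "i' = i" using nth_eq_iff_index_eq[OF ord_dist[OF v]] assms by blast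
  qed
qed

lemma pos_props: assumes "j \<in> {2..m}"
  shows "pos j < length (ord (par j))" "ord (par j) ! pos j = j"
proof -
  have pv: "par j \<in> {1..m}" using par_in assms by auto
  have "j \<in> set (ord (par j))" using ord_set[OF pv] assms by auto
  then obtain i where i: "i < length (ord (par j))" "ord (par j) ! i = j" by (auto simp: in_set_conv_nth)
  then have "pos j = i" using pos_nth[OF i(1)] by simp
  then show "pos j < length (ord (par j))" "ord (par j) ! pos j = j" using i by auto
qed

lemma len_pos: "i < length (ord v) \<Longrightarrow> v \<in> {1..m}"
  using len_out by (cases "v \<in> {1..m}") auto

lemma B_inj: assumes "i < length (ord v)" "i' < length (ord v)" "i \<noteq> i'"
  shows "B (ord v ! i) \<noteq> B (ord v ! i')"
proof -
  have v: "v \<in> {1..m}" using len_pos assms by blast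
  have "ord v ! i \<noteq> ord v ! i'" using nth_eq_iff_index_eq[OF ord_dist[OF v]] assms by blast
  then show ?thesis using beta_sib_neq L_in[OF v assms(1)] L_in[OF v assms(2)] by simp
qed

lemma elder_iff: "elder m par ord j \<longleftrightarrow> j \<in> {2..m} \<and> EL (par j) (pos j)"
proof
  assume e: "elder m par ord j"
  then have j: "j \<in> {2..m}" unfolding elder_def by blast
  from e obtain a b where ab: "a < b" "b < length (ord (par j))" "ord (par j) ! a = j"
       "B (ord (par j) ! b) < B j" unfolding elder_def by blast
  have "pos j = a" using pos_nth[of a "par j"] ab by simp
  then show "j \<in> {2..m} \<and> EL (par j) (pos j)" unfolding EL_def using j ab by auto
next
  assume "j \<in> {2..m} \<and> EL (par j) (pos j)"
  then have j: "j \<in> {2..m}" and e: "EL (par j) (pos j)" by auto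
  from e obtain b where b: "pos j < b" "b < length (ord (par j))" "B (ord (par j) ! b) < B (ord (par j) ! pos j)"
    unfolding EL_def by blast
  then show "elder m par ord j" unfolding elder_def using pos_props[OF j] j by auto
qed

lemma last_not_EL: "\<not> EL v (length (ord v) - 1)"
  unfolding EL_def by auto

lemma tp_props: assumes "i < length (ord v)"
  shows "i \<le> tp v i" "tp v i < length (ord v)" "\<not> EL v (tp v i)"
        "\<And>c. i \<le> c \<Longrightarrow> c < tp v i \<Longrightarrow> EL v c"
proof -
  let ?P = "\<lambda>b. i \<le> b \<and> b < length (ord v) \<and> \<not> EL v b"
  have ex: "?P (length (ord v) - 1)" using assms last_not_EL by auto
  have "?P (tp v i)" unfolding tp_def by (rule LeastI[of ?P, OF ex])
  then show "i \<le> tp v i" "tp v i < length (ord v)" "\<not> EL v (tp v i)" by auto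
  fix c assume c: "i \<le> c" "c < tp v i"
  show "EL v c"
  proof (rule ccontr)
    assume "\<not> EL v c"
    then have "?P c" using c \<open>?P (tp v i)\<close> by auto
    then have "tp v i \<le> c" unfolding tp_def by (rule Least_le)
    then show False using c by simp
  qed
qed

lemma tp_eq: assumes "i \<le> b" "b < length (ord v)" "\<not> EL v b" "\<And>c. i \<le> c \<Longrightarrow> c < b \<Longrightarrow> EL v c"
  shows "tp v i = b"
proof -
  have i: "i < length (ord v)" using assms by simp
  show ?thesis
  proof (rule ccontr)
    assume ne: "tp v i \<noteq> b"
    show False
    proof (cases "tp v i < b")
      case True then show False using tp_props[OF i] assms(4) by blast
    next
      case False then have "b < tp v i" using ne by simp
      then show False using tp_props(4)[OF i, of b] assms by simp
    qed
  qed
qed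

lemma K2: assumes "\<not> EL v a" "a < b" "b < length (ord v)"
  shows "B (ord v ! a) < B (ord v ! b)"
proof -
  have "\<not> B (ord v ! b) < B (ord v ! a)" using assms unfolding EL_def by blast
  moreover have "B (ord v ! a) \<noteq> B (ord v ! b)" using B_inj assms by simp
  ultimately show ?thesis by simp
qed

lemma EL_min: assumes "EL v c"
  shows "\<exists>d. c < d \<and> d < length (ord v) \<and> \<not> EL v d \<and> B (ord v ! d) < B (ord v ! c)"
proof -
  let ?D = "{c<..<length (ord v)}"
  have ne: "?D \<noteq> {}" using assms unfolding EL_def by auto
  have fin: "finite ?D" by simp
  let ?f = "\<lambda>d. B (ord v ! d)"
  have "Min (?f ` ?D) \<in> ?f ` ?D" using fin ne by (intro Min_in) auto
  then obtain d where d1: "d \<in> ?D" "?f d = Min (?f ` ?D)" by auto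
  have d: "d \<in> ?D" "\<And>d'. d' \<in> ?D \<Longrightarrow> B (ord v ! d) \<le> B (ord v ! d')"
    using d1 fin by auto
  have "\<not> EL v d"
  proof
    assume "EL v d"
    then obtain e where "d < e" "e < length (ord v)" "B (ord v ! e) < B (ord v ! d)" unfolding EL_def by blast
    moreover have "e \<in> ?D" using \<open>d < e\<close> \<open>e < length (ord v)\<close> d(1) by auto
    ultimately show False using d(2)[of e] by simp
  qed
  moreover obtain b where "c < b" "b < length (ord v)" "B (ord v ! b) < B (ord v ! c)"
    using assms unfolding EL_def by blast
  then have "B (ord v ! d) < B (ord v ! c)" using d(2)[of b] by force
  ultimately show ?thesis using d(1) by auto
qed

lemma K1: assumes "i < length (ord v)" "i \<le> c" "c < tp v i"
  shows "B (ord v ! tp v i) < B (ord v ! c)"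
proof -
  have ec: "EL v c" using tp_props(4)[OF assms(1)] assms by blast
  obtain d where d: "c < d" "d < length (ord v)" "\<not> EL v d" "B (ord v ! d) < B (ord v ! c)"
    using EL_min[OF ec] by blast
  have "tp v i \<le> d" unfolding tp_def using d assms by (intro Least_le) auto
  show ?thesis
  proof (cases "tp v i = d")
    case True then show ?thesis using d by simp
  next
    case False
    then have "tp v i < d" using \<open>tp v i \<le> d\<close> by simp
    then have "B (ord v ! tp v i) < B (ord v ! d)" using K2 tp_props[OF assms(1)] d by blast
    then show ?thesis using d by simp
  qed
qed

lemma tp_le: assumes "i < length (ord v)" "i \<le> c" "c \<le> tp v i"
  shows "B (ord v ! tp v i) \<le> B (ord v ! c)"
  using K1[OF assms(1,2)] assms(3) by (cases "c = tp v i") auto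

lemma tp_step: assumes "i < length (ord v)" "EL v i"
  shows "Suc i < length (ord v)" "tp v (Suc i) = tp v i"
proof -
  have "i \<noteq> tp v i" using tp_props(3)[OF assms(1)] assms(2) by auto
  then have "i < tp v i" using tp_props(1)[OF assms(1)] by simp
  then show si: "Suc i < length (ord v)" using tp_props(2)[OF assms(1)] by simp
  show "tp v (Suc i) = tp v i"
    by (rule tp_eq) (use \<open>i < tp v i\<close> tp_props[OF assms(1)] in auto)
qed

lemma parN_nth: assumes "i < length (ord v)"
  shows "parN (ord v ! i) = (if 0 < i \<and> EL v (i - 1) then ord v ! (i - 1) else v)"
proof -
  have v: "v \<in> {1..m}" using len_pos assms by blast
  note L = L_in[OF v assms]
  show ?thesis unfolding parN_def nh_def pos_nth[OF assms] using L by auto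
qed

lemma parN_out: "j \<notin> {2..m} \<Longrightarrow> parN j = 0"
  unfolding parN_def nh_def using par_out by auto

lemma parN_in: "j \<in> {2..m} \<Longrightarrow> parN j \<in> {1..m}"
proof -
  assume j: "j \<in> {2..m}"
  note pp = pos_props[OF j]
  have pv: "par j \<in> {1..m}" using par_in j by blast
  show "parN j \<in> {1..m}"
  proof (cases "nh j")
    case True
    then have "pos j - 1 < length (ord (par j))" using pp by simp
    then have "ord (par j) ! (pos j - 1) \<in> {2..m}" using L_in[OF pv] by blast
    then show ?thesis unfolding parN_def using True by auto
  next
    case False then show ?thesis unfolding parN_def using pv by simp
  qed
qed

end


lemma gdesc_refl: "desc f v v"
  unfolding desc_def by (rule exI[of _ 0]) simp

lemma gdesc_trans: "desc f u v \<Longrightarrow> desc f v w \<Longrightarrow> desc f u w"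
  unfolding desc_def
proof (elim exE)
  fix a b assume "(f ^^ a) u = v" "(f ^^ b) v = w"
  then have "(f ^^ (b + a)) u = w" by (simp add: funpow_add)
  then show "\<exists>k. (f ^^ k) u = w" by blast
qed

lemma gdesc_par: "desc f u (f u)"
  unfolding desc_def by (rule exI[of _ 1]) simp

lemma gdesc_step: "desc f u v \<Longrightarrow> u \<noteq> v \<Longrightarrow> desc f (f u) v"
  unfolding desc_def
proof (elim exE)
  fix k assume k: "(f ^^ k) u = v" and ne: "u \<noteq> v"
  then obtain k' where "k = Suc k'" by (cases k) auto
  then have "(f ^^ k') (f u) = v" using k by (simp add: funpow_Suc_right del: funpow.simps)
  then show "\<exists>k. (f ^^ k) (f u) = v" by blast
qed

lemma gdesc_induct[consumes 1, case_names refl step]: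
  assumes "desc f u v" "P v" "\<And>u. desc f (f u) v \<Longrightarrow> u \<noteq> v \<Longrightarrow> P (f u) \<Longrightarrow> P u"
  shows "P u"
proof -
  obtain k where k: "(f ^^ k) u = v" using assms(1) unfolding desc_def by blast
  then show ?thesis
  proof (induction k arbitrary: u)
    case 0 then show ?case using assms(2) by simp
  next
    case (Suc k)
    then have fk: "(f ^^ k) (f u) = v" by (simp add: funpow_Suc_right del: funpow.simps)
    then have "P (f u)" using Suc.IH by blast
    moreover have "desc f (f u) v" using fk unfolding desc_def by blast
    show ?case
    proof (cases "u = v")
      case True then show ?thesis using assms(2) by simp
    next
      case False then show ?thesis using assms(3) \<open>desc f (f u) v\<close> \<open>P (f u)\<close> by blast
    qed
  qed
qed

context planar
begin

lemma D1: assumes "i < length (ord v)" "i \<le> b" "b \<le> tp v i"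
  shows "desc parN (ord v ! b) (ord v ! i)"
proof -
  obtain d where b: "b = i + d" using assms(2) le_Suc_ex by blast
  have "i + d \<le> tp v i \<Longrightarrow> desc parN (ord v ! (i + d)) (ord v ! i)"
  proof (induction d)
    case 0 then show ?case by (simp add: gdesc_refl)
  next
    case (Suc d)
    have lt: "i + Suc d < length (ord v)" using Suc.prems tp_props(2)[OF assms(1)] by simp
    have "EL v (i + d)" using tp_props(4)[OF assms(1), of "i + d"] Suc.prems by simp
    then have "parN (ord v ! (i + Suc d)) = ord v ! (i + d)" using parN_nth[OF lt] by simp
    then have "desc parN (ord v ! (i + Suc d)) (ord v ! (i + d))" using gdesc_par by metis
    then show ?case using Suc gdesc_trans by simp
  qed
  then show ?thesis using b assms by simp
qed

lemma D2_aux: assumes "i < length (ord v)" shows "desc parN (ord v ! i) v"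
  using assms
proof (induction i)
  case 0
  then have "parN (ord v ! 0) = v" using parN_nth by simp
  then show ?case using gdesc_par by metis
next
  case (Suc i)
  show ?case
  proof (cases "EL v i")
    case True
    then have "parN (ord v ! Suc i) = ord v ! i" using parN_nth[OF Suc.prems] by simp
    then have "desc parN (ord v ! Suc i) (ord v ! i)" using gdesc_par by metis
    then show ?thesis using Suc gdesc_trans by simp
  next
    case False
    then have "parN (ord v ! Suc i) = v" using parN_nth[OF Suc.prems] by simp
    then show ?thesis using gdesc_par by metis
  qed
qed

lemma D2: "desc parN u (par u)"
proof (cases "u \<in> {2..m}")
  case True
  then show ?thesis using D2_aux[OF pos_props(1)[OF True]] pos_props(2)[OF True] by simp
next
  case False
  then show ?thesis using parN_out[OF False] par_out[OF False] gdesc_par[of parN u] by simp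
qed

lemma D3: "desc par u w \<Longrightarrow> desc parN u w"
proof (induction rule: gdesc_induct)
  case refl then show ?case by (rule gdesc_refl)
next
  case (step u) then show ?case using D2 gdesc_trans by blast
qed

lemma D4: assumes "desc parN u (ord v ! i)" "i < length (ord v)"
  shows "\<exists>b. i \<le> b \<and> b \<le> tp v i \<and> desc par u (ord v ! b)"
  using assms(1)
proof (induction rule: gdesc_induct)
  case refl then show ?case using tp_props(1)[OF assms(2)] desc_refl by blast
next
  case (step u)
  then obtain b where b: "i \<le> b" "b \<le> tp v i" "desc par (parN u) (ord v ! b)" by blast
  show ?case
  proof (cases "nh u")
    case False
    then have "parN u = par u" unfolding parN_def by simp
    then show ?thesis using b desc_par desc_trans by metis
  next
    case True
    then have u: "u \<in> {2..m}" and p0: "0 < pos u" and el: "EL (par u) (pos u - 1)" unfolding nh_def by auto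
    let ?w = "par u" let ?p = "pos u"
    have pe: "parN u = ord ?w ! (?p - 1)" unfolding parN_def using True by simp
    have plen: "?p < length (ord ?w)" using pos_props[OF u] by simp
    have wv: "?w \<in> {1..m}" using par_in u by blast
    have vv: "v \<in> {1..m}" using len_pos assms(2) by blast
    have e_in: "ord ?w ! (?p - 1) \<in> {2..m}" "par (ord ?w ! (?p - 1)) = ?w" using L_in[OF wv] plen by auto
    have bl: "b < length (ord v)" using b(2) tp_props(2)[OF assms(2)] by simp
    note Lb = L_in[OF vv bl]
    have d: "desc par (ord ?w ! (?p - 1)) (ord v ! b)" using b pe by simp
    show ?thesis
    proof (cases "ord ?w ! (?p - 1) = ord v ! b")
      case False
      then have "desc par ?w (ord v ! b)" using desc_step[OF d] e_in by simp
      then have "desc par u (ord v ! b)" using desc_par desc_trans by blast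
      then show ?thesis using b by blast
    next
      case True
      then have wv': "?w = v" using e_in Lb by simp
      then have "?p - 1 = b" using True nth_eq_iff_index_eq[OF ord_dist[OF vv]] plen bl by auto
      then have pb: "?p = Suc b" using p0 by simp
      have "EL v b" using el wv' \<open>?p - 1 = b\<close> by simp
      then have "b \<noteq> tp v i" using tp_props(3)[OF assms(2)] by auto
      then have "Suc b \<le> tp v i" using b by simp
      moreover have "ord v ! Suc b = u" using pos_props(2)[OF u] wv' pb by simp
      ultimately show ?thesis using b desc_refl by (metis le_SucI)
    qed
  qed
qed

lemma cayley_N: "is_cayley m parN"
  unfolding is_cayley_def
proof (intro conjI ballI allI impI)
  fix v assume "v \<in> {2..m}" then show "parN v \<in> {1..m}" by (rule parN_in)
next
  fix v assume "v \<notin> {2..m}" then show "parN v = 0" by (rule parN_out)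
next
  fix v assume "v \<in> {1..m}"
  then have "desc par v 1" by (rule desc_root)
  then have "desc parN v 1" by (rule D3)
  then show "\<exists>k. (parN ^^ k) v = 1" unfolding desc_def .
qed

end

sublocale planar \<subseteq> N: ctree m parN
  by unfold_locales (rule cayley_N)

context planar
begin

abbreviation BN where "BN \<equiv> beta m parN"

lemma BN_nth: assumes "i < length (ord v)"
  shows "BN (ord v ! i) = B (ord v ! tp v i)"
proof -
  have vv: "v \<in> {1..m}" using len_pos assms by blast
  have tl: "tp v i < length (ord v)" using tp_props(2)[OF assms] .
  note Li = L_in[OF vv assms]
  note Lt = L_in[OF vv tl]
  have tin: "ord v ! tp v i \<in> {1..m}" using Lt by auto
  show ?thesis
  proof (rule N.beta_eqI[where P = "\<lambda>u. \<exists>b. i \<le> b \<and> b \<le> tp v i \<and> desc par u (ord v ! b)"])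
    show "ord v ! i \<in> {1..m}" using Li by auto
    fix u assume u: "u \<in> {1..m}"
    show "desc parN u (ord v ! i) = (\<exists>b. i \<le> b \<and> b \<le> tp v i \<and> desc par u (ord v ! b))"
    proof
      assume "desc parN u (ord v ! i)" then show "\<exists>b. i \<le> b \<and> b \<le> tp v i \<and> desc par u (ord v ! b)"
        using D4 assms by blast
    next
      assume "\<exists>b. i \<le> b \<and> b \<le> tp v i \<and> desc par u (ord v ! b)"
      then obtain b where b: "i \<le> b" "b \<le> tp v i" "desc par u (ord v ! b)" by blast
      then show "desc parN u (ord v ! i)" using D3 D1[OF assms b(1,2)] gdesc_trans by blast
    qed
  next
    show "B (ord v ! tp v i) \<in> {1..m}" using beta_props(1) tin by blast
    show "\<exists>b\<ge>i. b \<le> tp v i \<and> desc par (B (ord v ! tp v i)) (ord v ! b)"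
      using beta_props(2)[OF tin] tp_props(1)[OF assms] by blast
  next
    fix u assume u: "u \<in> {1..m}" "\<exists>b\<ge>i. b \<le> tp v i \<and> desc par u (ord v ! b)"
    then obtain b where b: "i \<le> b" "b \<le> tp v i" "desc par u (ord v ! b)" by blast
    have bl: "b < length (ord v)" using b tl by simp
    have "B (ord v ! b) \<le> u" using beta_props(3)[of "ord v ! b" u] L_in[OF vv bl] u b by auto
    then show "B (ord v ! tp v i) \<le> u" using tp_le[OF assms b(1,2)] by simp
  qed
qed

end


definition IP where "IP m f = {i\<in>{1..m}. \<exists>j\<in>{2..m}. f j = i \<and> i > beta m f j}"

context planar
begin

definition hp where "hp v b = (LEAST s. s \<le> b \<and> (\<forall>c. s \<le> c \<longrightarrow> c < b \<longrightarrow> EL v c))"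

lemma hp_props: shows "hp v b \<le> b" "\<And>c. hp v b \<le> c \<Longrightarrow> c < b \<Longrightarrow> EL v c"
  "0 < hp v b \<Longrightarrow> \<not> EL v (hp v b - 1)"
proof -
  let ?P = "\<lambda>s. s \<le> b \<and> (\<forall>c. s \<le> c \<longrightarrow> c < b \<longrightarrow> EL v c)"
  have "?P b" by auto
  then have P: "?P (hp v b)" unfolding hp_def by (rule LeastI[of ?P])
  then show "hp v b \<le> b" "\<And>c. hp v b \<le> c \<Longrightarrow> c < b \<Longrightarrow> EL v c" by blast+
  assume pos: "0 < hp v b"
  show "\<not> EL v (hp v b - 1)"
  proof
    assume e: "EL v (hp v b - 1)"
    have "?P (hp v b - 1)"
    proof (intro conjI allI impI)
      have "hp v b \<le> b" using P by (rule conjunct1)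
      then show "hp v b - 1 \<le> b" by simp
    next
      fix c assume "hp v b - 1 \<le> c" "c < b"
      show "EL v c"
      proof (cases "c = hp v b - 1")
        case True then show ?thesis using e by simp
      next
        case False
        then have "hp v b \<le> c" using \<open>hp v b - 1 \<le> c\<close> by simp
        then show ?thesis using P \<open>c < b\<close> by blast
      qed
    qed
    then have "hp v b \<le> hp v b - 1" unfolding hp_def by (rule Least_le[of ?P])
    then show False using pos by simp
  qed
qed

lemma younger_iff: "younger m par ord j \<longleftrightarrow> j \<in> {2..m} \<and> \<not> EL (par j) (pos j)"
  unfolding younger_def elder_iff by auto

abbreviation tlv where "tlv j \<equiv> ord (par j) ! tp (par j) (pos j)"

lemma head_bij:
  "bij_betw tlv {j\<in>{2..m}. \<not> nh j \<and> Q (par j) (BN j)} {y\<in>{2..m}. younger m par ord y \<and> Q (par y) (B y)}"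
proof (rule bij_betw_imageI)
  show "inj_on tlv {j\<in>{2..m}. \<not> nh j \<and> Q (par j) (BN j)}"
  proof (rule inj_onI)
    fix j1 j2 assume j1: "j1 \<in> {j\<in>{2..m}. \<not> nh j \<and> Q (par j) (BN j)}"
      and j2: "j2 \<in> {j\<in>{2..m}. \<not> nh j \<and> Q (par j) (BN j)}" and eq: "tlv j1 = tlv j2"
    have j1m: "j1 \<in> {2..m}" and j2m: "j2 \<in> {2..m}" using j1 j2 by auto
    note p1 = pos_props[OF j1m] note p2 = pos_props[OF j2m]
    have v1: "par j1 \<in> {1..m}" using par_in j1m by blast
    have v2: "par j2 \<in> {1..m}" using par_in j2m by blast
    have t1: "tp (par j1) (pos j1) < length (ord (par j1))" using tp_props(2)[OF p1(1)] .
    have t2: "tp (par j2) (pos j2) < length (ord (par j2))" using tp_props(2)[OF p2(1)] .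
    have "par (tlv j1) = par j1" using L_in(2)[OF v1 t1] .
    moreover have "par (tlv j2) = par j2" using L_in(2)[OF v2 t2] .
    ultimately have pv: "par j1 = par j2" using eq by simp
    let ?v = "par j1"
    have t2': "tp ?v (pos j2) < length (ord ?v)" using t2 pv by simp
    have eq': "ord ?v ! tp ?v (pos j1) = ord ?v ! tp ?v (pos j2)" using eq pv by simp
    have "tp ?v (pos j1) = tp ?v (pos j2)"
      using nth_eq_iff_index_eq[OF ord_dist[OF v1] t1 t2'] eq' by simp
    have "pos j1 = pos j2"
    proof (rule ccontr)
      assume ne: "pos j1 \<noteq> pos j2"
      show False
      proof (cases "pos j1 < pos j2")
        case True
        have "EL ?v (pos j2 - 1)"
          using tp_props(4)[OF p1(1), of "pos j2 - 1"] True tp_props(1)[OF p2(1)[folded pv]]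
            \<open>tp ?v (pos j1) = tp ?v (pos j2)\<close> by simp
        then have "nh j2" unfolding nh_def using j2m True pv by simp
        then show False using j2 by simp
      next
        case False
        then have lt: "pos j2 < pos j1" using ne by simp
        have "EL ?v (pos j1 - 1)"
          using tp_props(4)[OF p2(1), of "pos j1 - 1"] lt tp_props(1)[OF p1(1)] pv
            \<open>tp ?v (pos j1) = tp ?v (pos j2)\<close> by simp
        then have "nh j1" unfolding nh_def using j1m lt by simp
        then show False using j1 by simp
      qed
    qed
    then have "ord (par j1) ! pos j1 = ord (par j2) ! pos j2" using pv by simp
    then show "j1 = j2" using p1(2) p2(2) by argo
  qed
next
  show "tlv ` {j\<in>{2..m}. \<not> nh j \<and> Q (par j) (BN j)} = {y\<in>{2..m}. younger m par ord y \<and> Q (par y) (B y)}"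
  proof (intro equalityI subsetI)
    fix y assume "y \<in> tlv ` {j\<in>{2..m}. \<not> nh j \<and> Q (par j) (BN j)}"
    then obtain j where j: "j \<in> {2..m}" "\<not> nh j" "Q (par j) (BN j)" and y: "y = tlv j" by auto
    note pj = pos_props[OF j(1)]
    have v: "par j \<in> {1..m}" using par_in j by blast
    note tpp = tp_props[OF pj(1)]
    have yin: "y \<in> {2..m}" "par y = par j" using L_in[OF v tpp(2)] y by auto
    have py: "pos y = tp (par j) (pos j)" using pos_nth[OF tpp(2)] y by simp
    have "younger m par ord y" unfolding younger_iff using yin py tpp(3) by simp
    moreover have "B y = BN j" using BN_nth[OF pj(1)] pj(2) y by simp
    ultimately show "y \<in> {y\<in>{2..m}. younger m par ord y \<and> Q (par y) (B y)}" using yin j(3) by simp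
  next
    fix y assume "y \<in> {y\<in>{2..m}. younger m par ord y \<and> Q (par y) (B y)}"
    then have y: "y \<in> {2..m}" "\<not> EL (par y) (pos y)" "Q (par y) (B y)" unfolding younger_iff by auto
    let ?v = "par y" let ?b = "pos y"
    note py = pos_props[OF y(1)]
    have v: "?v \<in> {1..m}" using par_in y by blast
    let ?s = "hp ?v ?b"
    note hs = hp_props[of ?v ?b]
    have sl: "?s < length (ord ?v)" using hs(1) py(1) by simp
    let ?j = "ord ?v ! ?s"
    have jin: "?j \<in> {2..m}" "par ?j = ?v" using L_in[OF v sl] by auto
    have pj: "pos ?j = ?s" using pos_nth[OF sl] .
    have "\<not> nh ?j" unfolding nh_def using pj jin hs(3) by auto
    have tps: "tp ?v ?s = ?b" by (rule tp_eq) (use hs py y in auto)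
    have tly: "tlv ?j = y" using jin pj tps py by simp
    have "BN ?j = B y" using BN_nth[OF sl] tps py by simp
    then have "?j \<in> {j\<in>{2..m}. \<not> nh j \<and> Q (par j) (BN j)}" using jin \<open>\<not> nh ?j\<close> y by simp
    then show "y \<in> tlv ` {j\<in>{2..m}. \<not> nh j \<and> Q (par j) (BN j)}" using tly by (metis (no_types, lifting) image_eqI)
  qed
qed

definition Eset where "Eset = {j\<in>{1..m}. elder m par ord j}"

lemma nh_bij: "bij_betw (\<lambda>j. ord (par j) ! (pos j - 1)) {j. nh j} Eset"
proof (rule bij_betw_imageI)
  show "inj_on (\<lambda>j. ord (par j) ! (pos j - 1)) {j. nh j}"
  proof (rule inj_onI)
    fix j1 j2 assume j1: "j1 \<in> {j. nh j}" and j2: "j2 \<in> {j. nh j}"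
      and eq: "ord (par j1) ! (pos j1 - 1) = ord (par j2) ! (pos j2 - 1)"
    have j1m: "j1 \<in> {2..m}" "0 < pos j1" using j1 unfolding nh_def by auto
    have j2m: "j2 \<in> {2..m}" "0 < pos j2" using j2 unfolding nh_def by auto
    note p1 = pos_props[OF j1m(1)] note p2 = pos_props[OF j2m(1)]
    have v1: "par j1 \<in> {1..m}" using par_in j1m by blast
    have v2: "par j2 \<in> {1..m}" using par_in j2m by blast
    have l1: "pos j1 - 1 < length (ord (par j1))" using p1 by simp
    have l2: "pos j2 - 1 < length (ord (par j2))" using p2 by simp
    have "par j1 = par (ord (par j1) ! (pos j1 - 1))" using L_in(2)[OF v1 l1] by argo
    also have "\<dots> = par (ord (par j2) ! (pos j2 - 1))" using eq by argo
    also have "\<dots> = par j2" using L_in(2)[OF v2 l2] by argo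
    finally have pv: "par j1 = par j2" .
    have "pos j1 - 1 = pos (ord (par j1) ! (pos j1 - 1))" using pos_nth[OF l1] by argo
    also have "\<dots> = pos (ord (par j2) ! (pos j2 - 1))" using eq by argo
    also have "\<dots> = pos j2 - 1" using pos_nth[OF l2] by argo
    finally have "pos j1 - 1 = pos j2 - 1" .
    then have "pos j1 = pos j2" using j1m j2m by simp
    then have "ord (par j1) ! pos j1 = ord (par j2) ! pos j2" using pv by simp
    then show "j1 = j2" using p1(2) p2(2) by argo
  qed
next
  show "(\<lambda>j. ord (par j) ! (pos j - 1)) ` {j. nh j} = Eset"
  proof (intro equalityI subsetI)
    fix e assume "e \<in> (\<lambda>j. ord (par j) ! (pos j - 1)) ` {j. nh j}"
    then obtain j where j: "nh j" and e: "e = ord (par j) ! (pos j - 1)" by auto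
    have jm: "j \<in> {2..m}" "0 < pos j" "EL (par j) (pos j - 1)" using j unfolding nh_def by auto
    note pj = pos_props[OF jm(1)]
    have v: "par j \<in> {1..m}" using par_in jm by blast
    have l: "pos j - 1 < length (ord (par j))" using pj by simp
    have ein: "e \<in> {2..m}" "par e = par j" using L_in[OF v l] e by auto
    have "pos e = pos j - 1" using pos_nth[OF l] e by simp
    then have "elder m par ord e" unfolding elder_iff using ein jm by simp
    then show "e \<in> Eset" unfolding Eset_def using ein by auto
  next
    fix e assume "e \<in> Eset"
    then have e: "e \<in> {2..m}" "EL (par e) (pos e)" unfolding Eset_def elder_iff by auto
    note pe = pos_props[OF e(1)]
    have v: "par e \<in> {1..m}" using par_in e by blast
    have sl: "Suc (pos e) < length (ord (par e))" using tp_step(1)[OF pe(1) e(2)] .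
    let ?j = "ord (par e) ! Suc (pos e)"
    have jin: "?j \<in> {2..m}" "par ?j = par e" using L_in[OF v sl] by auto
    have pj: "pos ?j = Suc (pos e)" using pos_nth[OF sl] .
    have "nh ?j" unfolding nh_def using jin pj e by simp
    moreover have "ord (par ?j) ! (pos ?j - 1) = e" using jin pj pe by simp
    ultimately show "e \<in> (\<lambda>j. ord (par j) ! (pos j - 1)) ` {j. nh j}" by (metis (no_types, lifting) image_eqI mem_Collect_eq)
  qed
qed

lemma nh_in: "nh j \<Longrightarrow> j \<in> {2..m}" unfolding nh_def by simp

lemma nh_parN: assumes "nh j" shows "parN j = ord (par j) ! (pos j - 1)" "BN j < parN j"
proof -
  show pe: "parN j = ord (par j) ! (pos j - 1)" unfolding parN_def using assms by simp
  have jm: "j \<in> {2..m}" "0 < pos j" "EL (par j) (pos j - 1)" using assms unfolding nh_def by auto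
  note pj = pos_props[OF jm(1)]
  have v: "par j \<in> {1..m}" using par_in jm by blast
  have l: "pos j - 1 < length (ord (par j))" using pj by simp
  have ts: "tp (par j) (pos j) = tp (par j) (pos j - 1)" using tp_step(2)[OF l jm(3)] jm by simp
  have "BN j = B (ord (par j) ! tp (par j) (pos j - 1))" using BN_nth[OF pj(1)] pj ts by simp
  also have "\<dots> < B (ord (par j) ! (pos j - 1))"
  proof (rule K1[OF l])
    show "pos j - 1 < tp (par j) (pos j - 1)"
      using tp_props(1,3)[OF l] jm(3) by (cases "pos j - 1 = tp (par j) (pos j - 1)") auto
  qed simp
  also have "\<dots> \<le> ord (par j) ! (pos j - 1)" using beta_le L_in[OF v l] by auto
  finally show "BN j < parN j" using pe by simp
qed

lemma head_parN: "j \<in> {2..m} \<Longrightarrow> \<not> nh j \<Longrightarrow> parN j = par j"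
  unfolding parN_def by simp

lemma impe_N: "impe_C m parN = impe_O m par ord + eld m par ord"
proof -
  have split: "{j\<in>{2..m}. BN j < parN j} = {j. nh j} \<union> {j\<in>{2..m}. \<not> nh j \<and> BN j < par j}"
  proof (intro equalityI subsetI)
    fix j assume j: "j \<in> {j\<in>{2..m}. BN j < parN j}"
    show "j \<in> {j. nh j} \<union> {j\<in>{2..m}. \<not> nh j \<and> BN j < par j}"
    proof (cases "nh j")
      case True then show ?thesis by simp
    next
      case False then show ?thesis using j head_parN[of j] by simp
    qed
  next
    fix j assume j: "j \<in> {j. nh j} \<union> {j\<in>{2..m}. \<not> nh j \<and> BN j < par j}"
    show "j \<in> {j\<in>{2..m}. BN j < parN j}"
    proof (cases "nh j")
      case True then show ?thesis using nh_parN(2)[of j] nh_in[of j] by simp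
    next
      case False then show ?thesis using j head_parN[of j] by simp
    qed
  qed
  have "{j. nh j} \<subseteq> {2..m}" using nh_in by blast
  then have fin1: "finite {j. nh j}" using finite_subset by blast
  have "card {j\<in>{2..m}. BN j < parN j} = card {j. nh j} + card {j\<in>{2..m}. \<not> nh j \<and> BN j < par j}"
    unfolding split by (rule card_Un_disjoint) (use fin1 in auto)
  also have "card {j. nh j} = card Eset" using bij_betw_same_card[OF nh_bij] .
  also have "card {j\<in>{2..m}. \<not> nh j \<and> BN j < par j} = card {y\<in>{2..m}. younger m par ord y \<and> B y < par y}"
    using bij_betw_same_card[OF head_bij[where Q = "\<lambda>p b. b < p"]] by simp
  finally show ?thesis unfolding impe_C_def impe_O_def eld_def Eset_def by simp
qed

lemma deg_N: "deg_root m parN = young_root m par ord"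
proof -
  have "{j\<in>{2..m}. parN j = 1} = {j\<in>{2..m}. \<not> nh j \<and> par j = 1}"
  proof (intro equalityI subsetI)
    fix j assume j: "j \<in> {j\<in>{2..m}. parN j = 1}"
    have "\<not> nh j"
    proof
      assume n: "nh j"
      have "BN j < parN j" using nh_parN(2)[OF n] .
      then have "BN j < 1" using j by simp
      moreover have "BN j \<in> {1..m}" using N.beta_props(1) j by auto
      ultimately show False by simp
    qed
    then show "j \<in> {j\<in>{2..m}. \<not> nh j \<and> par j = 1}" using j head_parN by auto
  next
    fix j assume "j \<in> {j\<in>{2..m}. \<not> nh j \<and> par j = 1}"
    then show "j \<in> {j\<in>{2..m}. parN j = 1}" using head_parN by auto
  qed
  then have "deg_root m parN = card {j\<in>{2..m}. \<not> nh j \<and> par j = 1}" unfolding deg_root_def by simp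
  also have "\<dots> = card {y\<in>{2..m}. younger m par ord y \<and> par y = 1}"
    using bij_betw_same_card[OF head_bij[where Q = "\<lambda>p b. p = 1"]] by simp
  finally show ?thesis unfolding young_root_def by (simp add: conj_commute)
qed

lemma Eset_IP: "Eset \<subseteq> IP m parN"
proof
  fix e assume "e \<in> Eset"
  then obtain j where j: "nh j" "e = ord (par j) ! (pos j - 1)" using nh_bij unfolding bij_betw_def by blast
  then have "parN j = e" "BN j < e" using nh_parN by auto
  moreover have "e \<in> {1..m}" using \<open>e \<in> Eset\<close> unfolding Eset_def by auto
  ultimately show "e \<in> IP m parN" unfolding IP_def using nh_in[OF j(1)] by blast
qed

end


lemma IP_sub: "is_cayley m f \<Longrightarrow> IP m f \<subseteq> {2..m}"
proof
  fix i assume c: "is_cayley m f" and i: "i \<in> IP m f"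
  interpret C: ctree m f by unfold_locales (rule c)
  obtain j where j: "j \<in> {2..m}" "f j = i" "i > beta m f j" using i unfolding IP_def by blast
  have "beta m f j \<ge> 1" using C.beta_props(1)[of j] j by auto
  then show "i \<in> {2..m}" using i j unfolding IP_def by auto
qed

locale qtree = ctree +
  fixes S :: "nat set"
  assumes S_IP: "S \<subseteq> IP m par"
begin

abbreviation BQ where "BQ \<equiv> beta m par"

lemma S_in: "S \<subseteq> {2..m}" using S_IP IP_sub[OF cay] by blast

definition cc where "cc u \<longleftrightarrow> u \<in> {2..m} \<and> par u \<in> S \<and> BQ u = BQ (par u)"

definition hk where "hk u = (LEAST k. \<not> cc ((par ^^ k) u))"
definition hd where "hd u = (par ^^ hk u) u"
definition pp where "pp u = (if u \<in> {2..m} then par (hd u) else 0)"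
definition key where "key u = (BQ u, dep u)"
definition CH where "CH v = {j\<in>{2..m}. pp j = v}"
definition oo where "oo v = (if v \<in> {1..m} then sort_key key (sorted_list_of_set (CH v)) else [])"

lemma cc_ex: "\<exists>k. \<not> cc ((par ^^ k) u)"
proof (cases "u \<in> {1..m}")
  case True
  then obtain k where "(par ^^ k) u = 1" using reach by blast
  then have "\<not> cc ((par ^^ k) u)" unfolding cc_def by simp
  then show ?thesis by blast
next
  case False
  then have "\<not> cc ((par ^^ 0) u)" unfolding cc_def by auto
  then show ?thesis by blast
qed

lemma hd_props: "\<not> cc (hd u)" "\<And>k. k < hk u \<Longrightarrow> cc ((par ^^ k) u)" "desc par u (hd u)"
proof -
  let ?P = "\<lambda>k. \<not> cc ((par ^^ k) u)"
  obtain k0 where k0: "?P k0" using cc_ex by blast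
  show "\<not> cc (hd u)" unfolding hd_def hk_def using LeastI[of ?P, OF k0] .
  show "\<And>k. k < hk u \<Longrightarrow> cc ((par ^^ k) u)" unfolding hk_def using not_less_Least[of _ ?P] by blast
  show "desc par u (hd u)" unfolding hd_def desc_def by blast
qed

lemma hd_nocc: "\<not> cc u \<Longrightarrow> hd u = u"
proof -
  assume "\<not> cc u"
  then have "hk u = 0" unfolding hk_def by (intro Least_eq_0) simp
  then show "hd u = u" unfolding hd_def by simp
qed

lemma hd_cc: assumes "cc u" shows "hd u = hd (par u)" "hk u = Suc (hk (par u))"
proof -
  let ?P = "\<lambda>k. \<not> cc ((par ^^ k) u)"
  obtain k0 where k0: "?P k0" using cc_ex by blast
  have "hk u = Suc (LEAST k. ?P (Suc k))" unfolding hk_def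
    by (rule Least_Suc[of ?P, OF k0]) (use assms in simp)
  moreover have "(\<lambda>k. ?P (Suc k)) = (\<lambda>k. \<not> cc ((par ^^ k) (par u)))"
    by (simp add: funpow_Suc_right del: funpow.simps)
  ultimately show hs: "hk u = Suc (hk (par u))" unfolding hk_def by simp
  show "hd u = hd (par u)" unfolding hd_def hs by (simp add: funpow_Suc_right del: funpow.simps)
qed

lemma cc_in: "cc u \<Longrightarrow> u \<in> {2..m} \<and> par u \<in> {2..m}"
  unfolding cc_def using S_in by auto

lemma hd_in: "u \<in> {2..m} \<Longrightarrow> hd u \<in> {2..m}"
proof (induction "hk u" arbitrary: u)
  case 0 then show ?case unfolding hd_def by simp
next
  case (Suc k)
  have "cc u" using hd_props(2)[of 0 u] Suc.hyps by simp
  then show ?case using hd_cc[of u] Suc cc_in by simp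
qed

lemma BQ_hd: "u \<in> {2..m} \<Longrightarrow> BQ (hd u) = BQ u"
proof (induction "hk u" arbitrary: u)
  case 0 then show ?case unfolding hd_def by simp
next
  case (Suc k)
  have "cc u" using hd_props(2)[of 0 u] Suc.hyps by simp
  then show ?case using hd_cc[of u] Suc cc_in unfolding cc_def by simp
qed

lemma dep_hd: "u \<in> {1..m} \<Longrightarrow> dep u = dep (hd u) + hk u"
proof -
  assume u: "u \<in> {1..m}"
  have hd1: "hd u \<in> {1..m}"
  proof (cases "cc u")
    case True then show ?thesis using hd_in[of u] cc_in[of u] by auto
  next
    case False then show ?thesis using hd_nocc u by simp
  qed
  have "(par ^^ (dep (hd u) + hk u)) u = 1"
    using dep_props[OF hd1] unfolding hd_def by (simp add: funpow_add)
  then show ?thesis using dep_unique[of "dep (hd u) + hk u" u] u by simp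
qed

end


context ctree
begin

lemma funpow_inj: assumes "(par ^^ i) u = (par ^^ j) u" "(par ^^ i) u \<ge> 1" "i \<le> j" shows "i = j"
proof -
  have "j = (j - i) + i" using assms by simp
  then have "(par ^^ (j - i)) ((par ^^ i) u) = (par ^^ i) u" using assms(1) by (metis funpow_add comp_apply)
  then have "j - i = 0" using acyclic assms(2) by blast
  then show ?thesis using assms by simp
qed

lemma between: assumes "w \<in> {2..m}" "desc par w q" "desc par q (par w)" shows "q = w \<or> q = par w"
proof (cases "q = w")
  case False
  then have "desc par (par w) q" using desc_step assms by blast
  moreover have "par w \<ge> 1" using par_in assms by auto
  ultimately have "par w = q" using desc_antisym assms(3) by blast
  then show ?thesis by simp
qed simp

end

context qtree
begin

lemma hd_in1: "u \<in> {1..m} \<Longrightarrow> hd u \<in> {1..m}"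
proof (cases "cc u")
  case True then show ?thesis using hd_in[of u] cc_in[of u] by auto
next
  case False then show "u \<in> {1..m} \<Longrightarrow> hd u \<in> {1..m}" using hd_nocc by simp
qed

lemma pp_in: "u \<in> {2..m} \<Longrightarrow> pp u \<in> {1..m}"
  unfolding pp_def using hd_in par_in by auto

lemma pp_out: "u \<notin> {2..m} \<Longrightarrow> pp u = 0"
  unfolding pp_def by auto

lemma desc_pp: "desc par u (pp u)"
proof (cases "u \<in> {2..m}")
  case True
  then show ?thesis unfolding pp_def using desc_trans[OF hd_props(3) desc_par] by simp
next
  case False
  then have "pp u = par u" using pp_out par_out by simp
  then show ?thesis using desc_par by simp
qed

lemma dep_pp: assumes "u \<in> {2..m}" shows "dep (pp u) < dep u"
proof -
  have h: "hd u \<in> {2..m}" using hd_in assms by blast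
  have "dep (pp u) < dep (hd u)" unfolding pp_def using assms dep_par[OF h] by simp
  also have "\<dots> \<le> dep u" using dep_hd[of u] assms by simp
  finally show ?thesis .
qed

lemma cayley_pp: "is_cayley m pp"
  unfolding is_cayley_def
proof (intro conjI ballI allI impI)
  fix v assume "v \<in> {2..m}" then show "pp v \<in> {1..m}" by (rule pp_in)
next
  fix v assume "v \<notin> {2..m}" then show "pp v = 0" by (rule pp_out)
next
  fix v assume "v \<in> {1..m}"
  then show "\<exists>k. (pp ^^ k) v = 1"
  proof (induction "dep v" arbitrary: v rule: less_induct)
    case less
    show ?case
    proof (cases "v = 1")
      case True then have "(pp ^^ 0) v = 1" by simp
      then show ?thesis by blast
    next
      case False
      then have v2: "v \<in> {2..m}" using less.prems by auto
      then obtain k where "(pp ^^ k) (pp v) = 1" using less.hyps[of "pp v"] dep_pp pp_in by blast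
      then have "(pp ^^ Suc k) v = 1" by (simp add: funpow_Suc_right del: funpow.simps)
      then show ?thesis by blast
    qed
  qed
qed

lemma seg_idx: assumes "u \<in> {1..m}" "desc par u a" "desc par a (hd u)"
  shows "\<exists>i \<le> hk u. a = (par ^^ i) u"
proof -
  obtain i where i: "(par ^^ i) u = a" using assms(2) unfolding desc_def by blast
  obtain k' where k': "(par ^^ k') a = hd u" using assms(3) unfolding desc_def by blast
  have h1: "hd u \<ge> 1" using hd_in1 assms by auto
  have "i \<le> hk u"
  proof (rule ccontr)
    assume "\<not> i \<le> hk u"
    then have "(par ^^ (k' + i)) u = (par ^^ hk u) u" using i k' unfolding hd_def by (simp add: funpow_add)
    then have "hk u = k' + i" using funpow_inj[of "hk u" u "k' + i"] h1 unfolding hd_def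
      using \<open>\<not> i \<le> hk u\<close> by simp
    then show False using \<open>\<not> i \<le> hk u\<close> by simp
  qed
  then show ?thesis using i by blast
qed

lemma seg_cc: assumes "u \<in> {1..m}" "desc par u a" "desc par a (hd u)" "a \<noteq> hd u"
  shows "cc a"
proof -
  obtain i where i: "i \<le> hk u" "a = (par ^^ i) u" using seg_idx assms by blast
  have "i \<noteq> hk u" using i assms(4) unfolding hd_def by auto
  then show ?thesis using hd_props(2)[of i u] i by simp
qed

lemma seg_below: assumes "u \<in> {1..m}" "desc par u a" "desc par a (hd u)" "a \<noteq> u"
  shows "\<exists>w. cc w \<and> par w = a \<and> desc par u w"
proof -
  obtain i where i: "i \<le> hk u" "a = (par ^^ i) u" using seg_idx assms by blast
  have "i \<noteq> 0"
  proof
    assume "i = 0" then show False using i assms(4) by simp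
  qed
  then obtain i' where i': "i = Suc i'" by (cases i) auto
  let ?w = "(par ^^ i') u"
  have "cc ?w" using hd_props(2)[of i' u] i i' by simp
  moreover have "par ?w = a" using i i' by simp
  moreover have "desc par u ?w" unfolding desc_def by blast
  ultimately show ?thesis by blast
qed

lemma cc_unique: assumes "cc a" "cc b" "par a = par b" shows "a = b"
proof (rule ccontr)
  assume "a \<noteq> b"
  then have "BQ a \<noteq> BQ b" using beta_sib_neq assms cc_in by blast
  then show False using assms unfolding cc_def by simp
qed

lemma chain_unique:
  "(par ^^ k) a = (par ^^ k) b \<Longrightarrow> (\<forall>i<k. cc ((par ^^ i) a)) \<Longrightarrow> (\<forall>i<k. cc ((par ^^ i) b)) \<Longrightarrow> a = b"
proof (induction k arbitrary: a b)
  case 0 then show ?case by simp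
next
  case (Suc k)
  have "(par ^^ k) (par a) = (par ^^ k) (par b)" using Suc.prems(1) by (simp add: funpow_Suc_right del: funpow.simps)
  moreover have "\<forall>i<k. cc ((par ^^ i) (par a))"
  proof (intro allI impI)
    fix i assume "i < k"
    then have "cc ((par ^^ Suc i) a)" using Suc.prems(2) by blast
    then show "cc ((par ^^ i) (par a))" by (simp add: funpow_Suc_right del: funpow.simps)
  qed
  moreover have "\<forall>i<k. cc ((par ^^ i) (par b))"
  proof (intro allI impI)
    fix i assume "i < k"
    then have "cc ((par ^^ Suc i) b)" using Suc.prems(3) by blast
    then show "cc ((par ^^ i) (par b))" by (simp add: funpow_Suc_right del: funpow.simps)
  qed
  ultimately have "par a = par b" using Suc.IH by blast
  moreover have "cc a" "cc b" using Suc.prems(2)[rule_format, of 0] Suc.prems(3)[rule_format, of 0] by auto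
  ultimately show ?case using cc_unique by blast
qed

lemma S_child: assumes "j \<in> S" shows "\<exists>w. cc w \<and> par w = j"
proof -
  have jI: "j \<in> IP m par" using assms S_IP by blast
  then obtain c where c: "c \<in> {2..m}" "par c = j" "j > BQ c" unfolding IP_def by blast
  have j1: "j \<in> {1..m}" using jI unfolding IP_def by blast
  let ?x = "BQ j"
  have x: "?x \<in> {1..m}" "desc par ?x j" using beta_props[OF j1] by auto
  have "?x \<le> BQ c" using beta_desc_le[of c j] c j1 desc_par[of c] by auto
  then have "?x \<noteq> j" using c by simp
  then have "desc par ?x ?x" "desc par ?x j" using x by auto
  obtain i where i: "(par ^^ i) ?x = j" using x unfolding desc_def by blast
  have "i \<noteq> 0" using i \<open>?x \<noteq> j\<close> by (cases i) auto
  then obtain i' where i': "i = Suc i'" by (cases i) auto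
  let ?a = "(par ^^ i') ?x"
  have pa: "par ?a = j" using i i' by simp
  have ad: "desc par ?x ?a" unfolding desc_def by blast
  have a2: "?a \<in> {2..m}"
  proof (rule ccontr)
    assume "?a \<notin> {2..m}"
    then have "par ?a = 0" by (rule par_out)
    then show False using pa j1 by simp
  qed
  have "BQ ?a \<le> ?x" using beta_props(3)[of ?a ?x] a2 x ad by auto
  moreover have "BQ j \<le> BQ ?a" using beta_desc_le[of ?a j] a2 desc_par[of ?a] pa j1 by auto
  ultimately have "BQ ?a = BQ (par ?a)" using pa by simp
  then have "cc ?a" unfolding cc_def using a2 pa assms by simp
  then show ?thesis using pa by blast
qed

end


sublocale qtree \<subseteq> P: ctree m pp
  by unfold_locales (rule cayley_pp)

context qtree
begin

abbreviation BP where "BP \<equiv> beta m pp"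

lemma DQ_fwd: assumes "desc pp u j" "u \<in> {1..m}" "j \<in> {1..m}"
  shows "desc par u j \<and> \<not> (\<exists>w. cc w \<and> par w = j \<and> desc par u w)"
proof -
  have "u \<in> {1..m} \<longrightarrow> desc par u j \<and> \<not> (\<exists>w. cc w \<and> par w = j \<and> desc par u w)"
    using assms(1)
  proof (induction rule: gdesc_induct)
    case refl
    show ?case
    proof (intro impI conjI)
      show "desc par j j" by simp
      show "\<not> (\<exists>w. cc w \<and> par w = j \<and> desc par j w)"
      proof
        assume "\<exists>w. cc w \<and> par w = j \<and> desc par j w"
        then obtain w where w: "cc w" "par w = j" "desc par j w" by blast
        then show False using par_not_desc[of w] cc_in[of w] by simp
      qed
    qed
  next
    case (step u)
    show ?case
    proof
      assume u: "u \<in> {1..m}"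
      have u2: "u \<in> {2..m}"
      proof (rule ccontr)
        assume "u \<notin> {2..m}"
        then have "pp u = 0" by (rule pp_out)
        then have "j = 0" using step.hyps(1) P.desc_0 by simp
        then show False using assms by simp
      qed
      let ?q = "pp u"
      have q: "?q \<in> {1..m}" using pp_in u2 by blast
      with step.IH have IH: "desc par ?q j" "\<not> (\<exists>w. cc w \<and> par w = j \<and> desc par ?q w)" by auto
      have uq: "desc par u ?q" by (rule desc_pp)
      show "desc par u j \<and> \<not> (\<exists>w. cc w \<and> par w = j \<and> desc par u w)"
      proof
        show "desc par u j" using desc_trans[OF uq IH(1)] .
        show "\<not> (\<exists>w. cc w \<and> par w = j \<and> desc par u w)"
        proof
          assume "\<exists>w. cc w \<and> par w = j \<and> desc par u w"
          then obtain w where w: "cc w" "par w = j" "desc par u w" by blast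
          have w2: "w \<in> {2..m}" using cc_in w by blast
          from desc_linear[OF uq w(3)] show False
          proof
            assume "desc par ?q w" then show False using IH(2) w by blast
          next
            assume wq: "desc par w ?q"
            have "?q = w \<or> ?q = par w" using between[OF w2 wq] IH(1) w(2) by simp
            then show False
            proof
              assume "?q = w" then show False using IH(2) w by auto
            next
              assume qj: "?q = par w"
              have h2: "hd u \<in> {2..m}" using hd_in u2 by blast
              have "par (hd u) = par w" using qj u2 unfolding pp_def by simp
              then have "hd u = w" using siblings_disjoint[OF h2 w2 _ _ hd_props(3) w(3)] by blast
              then show False using hd_props(1)[of u] w(1) by simp
            qed
          qed
        qed
      qed
    qed
  qed
  then show ?thesis using assms by blast
qed

lemma DQ_bwd: assumes "u \<in> {1..m}" "j \<in> {1..m}" "desc par u j" "\<not> (\<exists>w. cc w \<and> par w = j \<and> desc par u w)"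
  shows "desc pp u j"
  using assms
proof (induction "dep u" arbitrary: u rule: less_induct)
  case less
  show ?case
  proof (cases "u = j")
    case True then show ?thesis by (simp add: gdesc_refl)
  next
    case False
    have u2: "u \<in> {2..m}"
    proof (rule ccontr)
      assume "u \<notin> {2..m}"
      then have "u = 1" using less.prems by auto
      then have "desc par 0 j" using desc_step[OF less.prems(3) False] by simp
      then show False using desc_0 less.prems by fastforce
    qed
    let ?h = "hd u" let ?q = "pp u"
    have qh: "?q = par ?h" unfolding pp_def using u2 by simp
    have h2: "?h \<in> {2..m}" using hd_in u2 by blast
    from desc_linear[OF hd_props(3)[of u] less.prems(3)] show ?thesis
    proof
      assume jh: "desc par j ?h"
      obtain w where "cc w" "par w = j" "desc par u w" using seg_below[OF less.prems(1,3) jh not_sym[OF False]] by blast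
      then show ?thesis using less.prems(4) by blast
    next
      assume hj: "desc par ?h j"
      have "?h \<noteq> j"
      proof
        assume "?h = j"
        then have "desc par j ?h" by simp
        then obtain w where "cc w" "par w = j" "desc par u w" using seg_below[OF less.prems(1,3) _ not_sym[OF False]] by blast
        then show False using less.prems(4) by blast
      qed
      then have qj: "desc par ?q j" using desc_step[OF hj] qh by simp
      have q1: "?q \<in> {1..m}" using pp_in u2 by blast
      have nw: "\<not> (\<exists>w. cc w \<and> par w = j \<and> desc par ?q w)"
      proof
        assume "\<exists>w. cc w \<and> par w = j \<and> desc par ?q w"
        then obtain w where "cc w" "par w = j" "desc par ?q w" by blast
        moreover have "desc par u ?q" by (rule desc_pp)
        ultimately show False using less.prems(4) desc_trans by blast
      qed
      have "desc pp ?q j" using less.hyps[OF dep_pp[OF u2] q1 less.prems(2) qj nw] .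
      moreover have "desc pp u ?q" by (rule gdesc_par)
      ultimately show ?thesis using gdesc_trans by blast
    qed
  qed
qed

lemma DQ: assumes "u \<in> {1..m}" "j \<in> {1..m}"
  shows "desc pp u j \<longleftrightarrow> desc par u j \<and> \<not> (\<exists>w. cc w \<and> par w = j \<and> desc par u w)"
  using DQ_fwd DQ_bwd assms by blast

lemma BP_ge: assumes "j \<in> {1..m}" shows "BQ j \<le> BP j"
proof -
  have "BP j \<in> {1..m}" "desc pp (BP j) j" using P.beta_props[OF assms] by auto
  then have "desc par (BP j) j" using DQ assms by blast
  then show ?thesis using beta_props(3)[OF assms] \<open>BP j \<in> {1..m}\<close> by blast
qed

lemma BP_notS: assumes "j \<in> {1..m}" "j \<notin> S" shows "BP j = BQ j"
proof -
  have "\<And>u. u \<in> {1..m} \<Longrightarrow> desc pp u j \<longleftrightarrow> desc par u j"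
    using DQ assms cc_def by auto
  then have "{u\<in>{1..m}. desc pp u j} = {u\<in>{1..m}. desc par u j}" by auto
  then show ?thesis unfolding beta_def by simp
qed

lemma BP_S: assumes "j \<in> S" shows "BQ j < BP j"
proof -
  have j1: "j \<in> {1..m}" using S_in assms by auto
  obtain w where w: "cc w" "par w = j" using S_child assms by blast
  have w2: "w \<in> {2..m}" using cc_in w by blast
  have bw: "BQ w = BQ j" using w unfolding cc_def by simp
  have x: "BQ w \<in> {1..m}" "desc par (BQ w) w" using beta_props[of w] w2 by auto
  have "\<not> desc pp (BQ j) j" using DQ[of "BQ j" j] x bw w j1 by auto
  moreover have "desc pp (BP j) j" using P.beta_props[OF j1] by auto
  ultimately have "BP j \<noteq> BQ j" by auto
  then show ?thesis using BP_ge[OF j1] by simp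
qed

end


context qtree
begin

lemma key_less: "key a < key b \<longleftrightarrow> BQ a < BQ b \<or> (BQ a = BQ b \<and> dep a < dep b)"
  unfolding key_def by auto

lemma CH_fin: "finite (CH v)"
proof -
  have "CH v \<subseteq> {2..m}" unfolding CH_def by blast
  then show ?thesis using finite_subset by blast
qed

lemma CH_hd: assumes "j \<in> CH v" shows "j \<in> {2..m}" "hd j \<in> {2..m}" "par (hd j) = v"
proof -
  show j: "j \<in> {2..m}" using assms unfolding CH_def by blast
  then show "hd j \<in> {2..m}" by (rule hd_in)
  have "pp j = v" using assms unfolding CH_def by blast
  then show "par (hd j) = v" unfolding pp_def using j by simp
qed

lemma same_hd: assumes "j1 \<in> CH v" "j2 \<in> CH v" "BQ j1 = BQ j2" shows "hd j1 = hd j2"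
proof (rule ccontr)
  assume ne: "hd j1 \<noteq> hd j2"
  note a = CH_hd[OF assms(1)] note b = CH_hd[OF assms(2)]
  have "BQ (hd j1) \<noteq> BQ (hd j2)" using beta_sib_neq[OF a(2) b(2) _ ne] a(3) b(3) by simp
  then show False using BQ_hd a(1) b(1) assms(3) by simp
qed

lemma hk_desc: assumes "j \<in> {2..m}" "s \<in> {2..m}" "hd s = hd j" "hk j \<le> hk s"
  shows "desc par s j"
proof -
  let ?d = "hk s - hk j"
  let ?s' = "(par ^^ ?d) s"
  have e1: "(par ^^ hk j) ?s' = (par ^^ hk j) j"
  proof -
    have "(par ^^ hk j) ?s' = (par ^^ (hk j + ?d)) s" by (simp add: funpow_add)
    also have "hk j + ?d = hk s" using assms by simp
    finally show ?thesis using assms(3) unfolding hd_def by simp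
  qed
  have c1: "\<forall>i<hk j. cc ((par ^^ i) ?s')"
  proof (intro allI impI)
    fix i assume "i < hk j"
    then have "i + ?d < hk s" using assms by simp
    then have "cc ((par ^^ (i + ?d)) s)" using hd_props(2) by blast
    then show "cc ((par ^^ i) ?s')" by (simp add: funpow_add)
  qed
  have c2: "\<forall>i<hk j. cc ((par ^^ i) j)" using hd_props(2) by blast
  have "?s' = j" using chain_unique[OF e1 c1 c2] .
  then show ?thesis unfolding desc_def by blast
qed

lemma key_inj: "inj_on key (CH v)"
proof (rule inj_onI)
  fix j1 j2 assume j1: "j1 \<in> CH v" and j2: "j2 \<in> CH v" and k: "key j1 = key j2"
  have bq: "BQ j1 = BQ j2" and dp: "dep j1 = dep j2" using k unfolding key_def by auto
  have h: "hd j1 = hd j2" using same_hd[OF j1 j2 bq] .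
  note a = CH_hd[OF j1] note b = CH_hd[OF j2]
  have "dep j1 = dep (hd j1) + hk j1" "dep j2 = dep (hd j2) + hk j2" using dep_hd a(1) b(1) by auto
  then have hk: "hk j1 = hk j2" using dp h by simp
  have "desc par j1 j2" using hk_desc[OF b(1) a(1)] h hk by simp
  moreover have "desc par j2 j1" using hk_desc[OF a(1) b(1)] h hk by simp
  ultimately show "j1 = j2" using desc_antisym a(1) by auto
qed

lemma oo_props: assumes "v \<in> {1..m}"
  shows "set (oo v) = CH v" "distinct (oo v)" "sorted_wrt (<) (map key (oo v))"
proof -
  have o: "oo v = sort_key key (sorted_list_of_set (CH v))" unfolding oo_def using assms by simp
  show s: "set (oo v) = CH v" unfolding o using CH_fin by simp
  show d: "distinct (oo v)" unfolding o by simp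
  have "distinct (map key (oo v))" using d key_inj s by (simp add: distinct_map)
  moreover have "sorted (map key (oo v))" unfolding o by simp
  ultimately show "sorted_wrt (<) (map key (oo v))" using strict_sorted_iff by blast
qed

lemma planar_pp: "planar m pp oo"
proof (unfold_locales)
  fix v assume v: "v \<in> {1..m}"
  show "distinct (oo v)" using oo_props[OF v] by simp
  show "set (oo v) = {j \<in> {2..m}. pp j = v}" using oo_props[OF v] unfolding CH_def by simp
next
  fix v assume "v \<notin> {1..m}" then show "oo v = []" unfolding oo_def by auto
qed

end

sublocale qtree \<subseteq> PL: planar m pp oo
  by (rule planar_pp)

context qtree
begin

lemma oo_less: assumes "v \<in> {1..m}" "a < length (oo v)" "b < length (oo v)"
  shows "key (oo v ! a) < key (oo v ! b) \<longleftrightarrow> a < b"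
proof
  assume k: "key (oo v ! a) < key (oo v ! b)"
  show "a < b"
  proof (rule ccontr)
    assume "\<not> a < b"
    then have "b < a \<or> b = a" by auto
    then show False
    proof
      assume "b < a"
      then have "key (oo v ! b) < key (oo v ! a)"
        using sorted_wrt_nth_less[OF oo_props(3)[OF assms(1)], of b a] assms by simp
      then show False using k by simp
    next
      assume "b = a" then show False using k by simp
    qed
  qed
next
  assume "a < b"
  then show "key (oo v ! a) < key (oo v ! b)"
    using sorted_wrt_nth_less[OF oo_props(3)[OF assms(1)], of a b] assms by simp
qed

lemma pos_less: assumes "a \<in> {2..m}" "b \<in> {2..m}" "pp a = pp b"
  shows "key a < key b \<longleftrightarrow> PL.pos a < PL.pos b"
proof -
  have v: "pp a \<in> {1..m}" using pp_in assms by blast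
  note pa = PL.pos_props[OF assms(1)] note pb = PL.pos_props[OF assms(2)]
  show ?thesis using oo_less[OF v pa(1), of "PL.pos b"] pa pb assms(3) by simp
qed

lemma cc_child_CH: assumes "cc w" shows "hd w = hd (par w)" "pp w = pp (par w)" "dep w = Suc (dep (par w))"
  "w \<in> {2..m}" "par w \<in> {2..m}"
proof -
  show h: "hd w = hd (par w)" using hd_cc assms by simp
  show "w \<in> {2..m}" "par w \<in> {2..m}" using cc_in assms by auto
  then show "pp w = pp (par w)" unfolding pp_def using h by simp
  show "dep w = Suc (dep (par w))" using dep_par cc_in assms by blast
qed

lemma cc_key: assumes "cc w" shows "key (par w) < key w"
  using cc_child_CH[OF assms] assms unfolding key_less cc_def by simp

lemma elder_S: assumes "j \<in> {2..m}" shows "elder m pp oo j \<longleftrightarrow> j \<in> S"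
proof
  assume jS: "j \<in> S"
  let ?v = "pp j"
  have v: "?v \<in> {1..m}" using pp_in assms by blast
  let ?X = "{s \<in> CH ?v. hd s = hd j \<and> dep j < dep s}"
  have finX: "finite ?X" using CH_fin by simp
  obtain w where w: "cc w" "par w = j" using S_child jS by blast
  note cw = cc_child_CH[OF w(1)]
  have "w \<in> ?X" using cw w unfolding CH_def by simp
  then have neX: "?X \<noteq> {}" by blast
  have "Max (dep ` ?X) \<in> dep ` ?X" using finX neX by simp
  then obtain s where s: "s \<in> ?X" "dep s = Max (dep ` ?X)" by auto
  have smax: "\<And>s'. s' \<in> ?X \<Longrightarrow> dep s' \<le> dep s" using s finX by simp
  have sCH: "s \<in> CH ?v" using s by simp
  note sh = CH_hd[OF sCH]
  have sS: "s \<notin> S"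
  proof
    assume "s \<in> S"
    then obtain w' where w': "cc w'" "par w' = s" using S_child by blast
    note cw' = cc_child_CH[OF w'(1)]
    have "w' \<in> ?X" using cw' w' s unfolding CH_def by simp
    then have "dep w' \<le> dep s" using smax by blast
    then show False using cw' w' by simp
  qed
  have "BQ s = BQ j" using BQ_hd[of s] BQ_hd[of j] sh assms s by simp
  then have bs: "BP s < BP j" using BP_notS[of s] sh sS BP_S[OF jS] by simp
  have "key j < key s" using s \<open>BQ s = BQ j\<close> unfolding key_less by simp
  then have ps: "PL.pos j < PL.pos s" using pos_less[OF assms sh(1)] sCH unfolding CH_def by simp
  note pj = PL.pos_props[OF assms] note pss = PL.pos_props[OF sh(1)]
  have ppj: "pp s = pp j" using sCH unfolding CH_def by simp
  show "elder m pp oo j" unfolding elder_def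
    using assms ps pj pss ppj bs by (intro conjI exI[of _ "PL.pos j"] exI[of _ "PL.pos s"]) auto
next
  assume e: "elder m pp oo j"
  show "j \<in> S"
  proof (rule ccontr)
    assume jS: "j \<notin> S"
    let ?v = "pp j"
    have v: "?v \<in> {1..m}" using pp_in assms by blast
    have "PL.EL ?v (PL.pos j)" using e PL.elder_iff by blast
    then obtain b where b: "PL.pos j < b" "b < length (oo ?v)" "BP (oo ?v ! b) < BP (oo ?v ! PL.pos j)"
      unfolding PL.EL_def by blast
    let ?s = "oo ?v ! b"
    note pj = PL.pos_props[OF assms]
    have sCH: "?s \<in> CH ?v" using oo_props(1)[OF v] nth_mem[OF b(2)] by simp
    note sh = CH_hd[OF sCH]
    have bj: "BP j = BQ j" using BP_notS jS assms by simp
    have bsj: "BP ?s < BQ j" using b pj bj by simp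
    have "key j < key ?s" using oo_less[OF v pj(1) b(2)] b pj by simp
    then have "BQ j < BQ ?s \<or> (BQ j = BQ ?s \<and> dep j < dep ?s)" unfolding key_less .
    then show False
    proof
      assume "BQ j < BQ ?s"
      then show False using BP_ge[of ?s] sh bsj by simp
    next
      assume a: "BQ j = BQ ?s \<and> dep j < dep ?s"
      have jCH: "j \<in> CH ?v" unfolding CH_def using assms by simp
      have h: "hd ?s = hd j" using same_hd[OF sCH jCH] a by simp
      have "dep j = dep (hd j) + hk j" "dep ?s = dep (hd ?s) + hk ?s" using dep_hd assms sh by auto
      then have "hk j \<le> hk ?s" using a h by simp
      then have d: "desc par ?s j" using hk_desc[OF assms sh(1) h] by simp
      have "j \<noteq> ?s" using a by auto
      moreover have "desc par j (hd ?s)" using h hd_props(3) by simp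
      ultimately obtain w where "cc w" "par w = j" using seg_below[OF _ d] sh by fastforce
      then show False using jS unfolding cc_def by simp
    qed
  qed
qed

lemma Eset_PL: "PL.Eset = S"
  unfolding PL.Eset_def using elder_S S_in elder_def by auto

end


lemma strict_sorted_key_unique:
  assumes "sorted_wrt (<) (map (f :: 'a \<Rightarrow> 'b :: linorder) xs)" "sorted_wrt (<) (map f ys)" "set xs = set ys"
  shows "xs = ys"
proof -
  have "set (map f xs) = set (map f ys)" using assms(3) by simp
  then have m: "map f xs = map f ys" using strict_sorted_equal[OF assms(1) assms(2)] by simp
  have "distinct (map f xs)" using assms(1) strict_sorted_iff by blast
  then have "inj_on f (set xs)" by (simp add: distinct_map)
  then have "inj_on f (set xs \<union> set ys)" using assms(3) by simp
  then show ?thesis using map_inj_on[OF m] by blast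
qed

context qtree
begin

lemma parN_PL: "PL.parN j = par j"
proof (cases "j \<in> {2..m}")
  case False
  then show ?thesis using PL.parN_out par_out by simp
next
  case True
  note j = True
  let ?v = "pp j"
  have v: "?v \<in> {1..m}" using pp_in j by blast
  note pj = PL.pos_props[OF j]
  show ?thesis
  proof (cases "cc j")
    case True
    let ?w = "par j"
    note cw = cc_child_CH[OF True]
    have ppw: "pp ?w = ?v" using cw by simp
    have kw: "key ?w < key j" using cc_key[OF True] .
    then have pw: "PL.pos ?w < PL.pos j" using pos_less[OF cw(5) j] ppw by simp
    note pwp = PL.pos_props[OF cw(5)]
    have pw1: "PL.pos ?w = PL.pos j - 1"
    proof (rule ccontr)
      assume "PL.pos ?w \<noteq> PL.pos j - 1"
      then have lt: "PL.pos ?w < PL.pos j - 1" using pw by simp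
      let ?e = "oo ?v ! (PL.pos j - 1)"
      have el: "PL.pos j - 1 < length (oo ?v)" using pj by simp
      have eCH: "?e \<in> CH ?v" using oo_props(1)[OF v] nth_mem[OF el] by simp
      note eh = CH_hd[OF eCH]
      have ppe: "pp ?e = ?v" using eCH unfolding CH_def by simp
      have pe: "PL.pos ?e = PL.pos j - 1" using PL.pos_nth[OF el] .
      have k1: "key ?w < key ?e" using pos_less[OF cw(5) eh(1)] ppw ppe pe lt by simp
      have k2: "key ?e < key j" using pos_less[OF eh(1) j] ppe pe pw by simp
      have bw: "BQ ?w = BQ j" using True unfolding cc_def by simp
      show False using k1 k2 bw cw(3) unfolding key_less by auto
    qed
    have p0: "0 < PL.pos j" using pw by simp
    have "?w \<in> S" using True unfolding cc_def by simp
    then have "elder m pp oo ?w" using elder_S cw(5) by blast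
    then have "PL.EL ?v (PL.pos j - 1)" using PL.elder_iff ppw pw1 by simp
    then have "PL.nh j" unfolding PL.nh_def using j p0 by simp
    then have "PL.parN j = oo ?v ! (PL.pos j - 1)" unfolding PL.parN_def by simp
    also have "\<dots> = ?w" using pw1 pwp ppw by simp
    finally show ?thesis .
  next
    case False
    have ppj: "pp j = par j" unfolding pp_def using j hd_nocc[OF False] by simp
    have "\<not> PL.nh j"
    proof
      assume n: "PL.nh j"
      then have p0: "0 < PL.pos j" and el: "PL.EL ?v (PL.pos j - 1)" unfolding PL.nh_def by auto
      let ?e = "oo ?v ! (PL.pos j - 1)"
      have ell: "PL.pos j - 1 < length (oo ?v)" using pj by simp
      have eCH: "?e \<in> CH ?v" using oo_props(1)[OF v] nth_mem[OF ell] by simp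
      note eh = CH_hd[OF eCH]
      have ppe: "pp ?e = ?v" using eCH unfolding CH_def by simp
      have pe: "PL.pos ?e = PL.pos j - 1" using PL.pos_nth[OF ell] .
      have "elder m pp oo ?e" using PL.elder_iff eh ppe pe el by simp
      then have "?e \<in> S" using elder_S eh by blast
      then obtain c where c: "cc c" "par c = ?e" using S_child by blast
      note cc' = cc_child_CH[OF c(1)]
      have ppc: "pp c = ?v" using cc' c ppe by simp
      have cj: "c \<noteq> j" using c False by auto
      have k1: "key ?e < key c" using cc_key[OF c(1)] c by simp
      have k2: "key ?e < key j" using pos_less[OF eh(1) j] ppe pe p0 by simp
      have cCH: "c \<in> CH ?v" unfolding CH_def using cc' ppc by simp
      have jCH: "j \<in> CH ?v" unfolding CH_def using j by simp
      have "key c \<noteq> key j" using key_inj cCH jCH cj unfolding inj_on_def by blast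
      moreover have "BQ c = BQ ?e" using c unfolding cc_def by simp
      moreover have "dep c = Suc (dep ?e)" using cc' c by simp
      ultimately have k3: "key c < key j" using k2 unfolding key_less key_def by auto
      have "PL.pos ?e < PL.pos c" using pos_less[OF eh(1) cc'(4)] ppe ppc k1 by simp
      moreover have "PL.pos c < PL.pos j" using pos_less[OF cc'(4) j] ppc k3 by simp
      ultimately show False using pe p0 by simp
    qed
    then show ?thesis unfolding PL.parN_def using ppj by simp
  qed
qed

lemma Phi_Psi: "PL.parN = par" "PL.Eset = S"
  using parN_PL Eset_PL by auto

end


locale pq = planar

sublocale pq \<subseteq> Q: qtree m parN Eset
  by unfold_locales (rule Eset_IP)

context pq
begin

lemma nh_Eset: assumes "nh u" shows "parN u \<in> Eset"
proof -
  have "parN u = ord (par u) ! (pos u - 1)" using nh_parN(1)[OF assms] .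
  then show ?thesis using nh_bij assms unfolding bij_betw_def by auto
qed

lemma cc_nh: "Q.cc u \<longleftrightarrow> nh u"
proof
  assume n: "nh u"
  have u: "u \<in> {2..m}" "0 < pos u" "EL (par u) (pos u - 1)" using n unfolding nh_def by auto
  note pu = pos_props[OF u(1)]
  have v: "par u \<in> {1..m}" using par_in u by blast
  have l: "pos u - 1 < length (ord (par u))" using pu by simp
  have ts: "tp (par u) (pos u) = tp (par u) (pos u - 1)" using tp_step(2)[OF l u(3)] u by simp
  have "BN u = B (ord (par u) ! tp (par u) (pos u))" using BN_nth[OF pu(1)] pu by simp
  also have "\<dots> = BN (ord (par u) ! (pos u - 1))" using BN_nth[OF l] ts by simp
  also have "ord (par u) ! (pos u - 1) = parN u" using nh_parN(1)[OF n] by simp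
  finally show "Q.cc u" unfolding Q.cc_def using u nh_Eset[OF n] by simp
next
  assume c: "Q.cc u"
  then have u: "u \<in> {2..m}" and pe: "parN u \<in> Eset" and bb: "BN u = BN (parN u)" unfolding Q.cc_def by auto
  show "nh u"
  proof (rule ccontr)
    assume nn: "\<not> nh u"
    let ?v = "par u"
    have pv: "parN u = ?v" using head_parN[OF u nn] .
    have ve: "elder m par ord ?v" using pe pv unfolding Eset_def by simp
    then have v2: "?v \<in> {2..m}" and el: "EL (par ?v) (pos ?v)" using elder_iff by auto
    note pv2 = pos_props[OF v2]
    have w: "par ?v \<in> {1..m}" using par_in v2 by blast
    have "pos ?v < tp (par ?v) (pos ?v)"
      using tp_props(1,3)[OF pv2(1)] el by (cases "pos ?v = tp (par ?v) (pos ?v)") auto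
    then have "B (ord (par ?v) ! tp (par ?v) (pos ?v)) < B (ord (par ?v) ! pos ?v)"
      using K1[OF pv2(1)] by simp
    then have lt: "BN ?v < B ?v" using BN_nth[OF pv2(1)] pv2 by simp
    note pu = pos_props[OF u]
    have vv: "?v \<in> {1..m}" using v2 by auto
    have tl: "tp ?v (pos u) < length (ord ?v)" using tp_props(2)[OF pu(1)] .
    have t2: "ord ?v ! tp ?v (pos u) \<in> {2..m}" "par (ord ?v ! tp ?v (pos u)) = ?v" using L_in[OF vv tl] by auto
    have "B ?v \<le> B (ord ?v ! tp ?v (pos u))"
      using beta_desc_le[of "ord ?v ! tp ?v (pos u)" ?v] t2 vv desc_par[of "ord ?v ! tp ?v (pos u)"] by auto
    also have "\<dots> = BN u" using BN_nth[OF pu(1)] pu by simp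
    finally show False using lt bb pv by simp
  qed
qed

lemma iter: assumes "u \<in> {2..m}" "k \<le> pos u - hp (par u) (pos u)"
  shows "(parN ^^ k) u = ord (par u) ! (pos u - k)"
  using assms(2)
proof (induction k)
  case 0 then show ?case using pos_props[OF assms(1)] by simp
next
  case (Suc k)
  let ?v = "par u" let ?p = "pos u"
  note pu = pos_props[OF assms(1)]
  have hp: "hp ?v ?p \<le> ?p - Suc k" using Suc.prems by simp
  have l: "?p - k < length (ord ?v)" using pu by simp
  have "EL ?v (?p - k - 1)" using hp_props(2)[of ?v ?p "?p - k - 1"] hp Suc.prems by simp
  moreover have "0 < ?p - k" using Suc.prems by simp
  ultimately have "parN (ord ?v ! (?p - k)) = ord ?v ! (?p - k - 1)" using parN_nth[OF l] by simp
  then show ?case using Suc by simp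
qed

lemma hd_eq: assumes "u \<in> {2..m}" shows "Q.hd u = ord (par u) ! hp (par u) (pos u)"
proof -
  let ?v = "par u" let ?p = "pos u" let ?K = "?p - hp ?v ?p"
  note pu = pos_props[OF assms]
  have hle: "hp ?v ?p \<le> ?p" using hp_props(1) .
  have v: "?v \<in> {1..m}" using par_in assms by blast
  have "Q.hk u = ?K" unfolding Q.hk_def
  proof (rule Least_equality)
    have l: "hp ?v ?p < length (ord ?v)" using hle pu by simp
    have "(parN ^^ ?K) u = ord ?v ! hp ?v ?p" using iter[OF assms, of ?K] hle by simp
    moreover have "\<not> nh (ord ?v ! hp ?v ?p)"
      unfolding nh_def using pos_nth[OF l] L_in[OF v l] hp_props(3)[of ?v ?p] by auto
    ultimately show "\<not> Q.cc ((parN ^^ ?K) u)" using cc_nh by simp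
  next
    fix k assume nk: "\<not> Q.cc ((parN ^^ k) u)"
    show "?K \<le> k"
    proof (rule ccontr)
      assume "\<not> ?K \<le> k"
      then have kk: "k < ?K" by simp
      have l: "?p - k < length (ord ?v)" using pu by simp
      have e: "(parN ^^ k) u = ord ?v ! (?p - k)" using iter[OF assms] kk by simp
      have "EL ?v (?p - k - 1)" using hp_props(2)[of ?v ?p "?p - k - 1"] kk by simp
      then have "nh (ord ?v ! (?p - k))"
        unfolding nh_def using pos_nth[OF l] L_in[OF v l] kk by auto
      then show False using nk e cc_nh by simp
    qed
  qed
  then show ?thesis unfolding Q.hd_def using iter[OF assms, of ?K] hle by simp
qed

lemma pp_eq: "Q.pp = par"
proof
  fix u show "Q.pp u = par u"
  proof (cases "u \<in> {2..m}")
    case False then show ?thesis using Q.pp_out par_out by simp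
  next
    case True
    let ?v = "par u" let ?p = "pos u"
    note pu = pos_props[OF True]
    have v: "?v \<in> {1..m}" using par_in True by blast
    have l: "hp ?v ?p < length (ord ?v)" using hp_props(1)[of ?v ?p] pu by simp
    have "Q.pp u = parN (ord ?v ! hp ?v ?p)" unfolding Q.pp_def using True hd_eq[OF True] by simp
    also have "\<dots> = ?v" using parN_nth[OF l] hp_props(3)[of ?v ?p] by auto
    finally show ?thesis .
  qed
qed

lemma ord_sorted: assumes "v \<in> {1..m}" shows "sorted_wrt (<) (map Q.key (ord v))"
proof -
  have tr: "transp ((<) :: nat \<times> nat \<Rightarrow> _ \<Rightarrow> bool)" by (auto intro: transpI)
  show ?thesis unfolding sorted_wrt_iff_nth_Suc_transp[OF tr]
  proof (intro allI impI)
    fix i assume si: "Suc i < length (map Q.key (ord v))"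
    then have si: "Suc i < length (ord v)" by simp
    then have il: "i < length (ord v)" by simp
    show "map Q.key (ord v) ! i < map Q.key (ord v) ! Suc i"
    proof (cases "EL v i")
      case True
      have pn: "parN (ord v ! Suc i) = ord v ! i" using parN_nth[OF si] True by simp
      have "BN (ord v ! Suc i) = BN (ord v ! i)"
        using BN_nth[OF si] BN_nth[OF il] tp_step(2)[OF il True] by simp
      moreover have "N.dep (ord v ! Suc i) = Suc (N.dep (ord v ! i))"
        using N.dep_par[of "ord v ! Suc i"] L_in[OF assms si] pn by simp
      ultimately show ?thesis using si unfolding Q.key_def by simp
    next
      case False
      have "tp v i = i" by (rule tp_eq) (use il False in auto)
      then have b1: "BN (ord v ! i) = B (ord v ! i)" using BN_nth[OF il] by simp
      have "Suc i \<le> tp v (Suc i)" "tp v (Suc i) < length (ord v)" using tp_props[OF si] by auto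
      then have "B (ord v ! i) < B (ord v ! tp v (Suc i))" using K2[OF False] by simp
      then have "BN (ord v ! i) < BN (ord v ! Suc i)" using b1 BN_nth[OF si] by simp
      then show ?thesis using si unfolding Q.key_def by simp
    qed
  qed
qed

lemma oo_eq: "Q.oo = ord"
proof
  fix v show "Q.oo v = ord v"
  proof (cases "v \<in> {1..m}")
    case False
    then have "Q.oo v = []" unfolding Q.oo_def by auto
    then show ?thesis using ord_out[OF False] by simp
  next
    case True
    have "set (Q.oo v) = Q.CH v" using Q.oo_props(1)[OF True] .
    also have "\<dots> = set (ord v)" unfolding Q.CH_def pp_eq using ord_set[OF True] by simp
    finally show ?thesis using strict_sorted_key_unique[OF Q.oo_props(3)[OF True] ord_sorted[OF True]] by simp
  qed
qed

end

lemma (in planar) Psi_Phi: "qtree.pp m parN Eset = par" "qtree.oo m parN Eset = ord"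
proof -
  interpret pq m par ord by unfold_locales
  show "qtree.pp m parN Eset = par" using pp_eq .
  show "qtree.oo m parN Eset = ord" using oo_eq .
qed



context ctree
begin

abbreviation GP where "GP i k \<equiv> \<forall>k'\<le>k. i \<le> (par ^^ k') i"

lemma gap_char: assumes "(par ^^ K) i = a" "GP i K" "par a < i"
  shows "gap_top par i = a"
proof -
  have "(GREATEST k. GP i k) = K"
  proof (rule Greatest_equality)
    show "GP i K" using assms(2) .
    fix y assume y: "GP i y"
    show "y \<le> K"
    proof (rule ccontr)
      assume "\<not> y \<le> K"
      then have "Suc K \<le> y" by simp
      then have "i \<le> (par ^^ Suc K) i" using y by blast
      then show False using assms by simp
    qed
  qed
  then show ?thesis unfolding gap_top_def using assms(1) by simp
qed

lemma gap_beta: assumes "j \<in> {1..m}" "j = 1 \<or> par j < beta m par j"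
  shows "gap_top par (beta m par j) = j"
proof -
  let ?i = "beta m par j"
  note bp = beta_props[OF assms(1)]
  obtain K where K: "(par ^^ K) ?i = j" using bp(2) unfolding desc_def by blast
  have "GP ?i K"
  proof (intro allI impI)
    fix k' assume k': "k' \<le> K"
    have "K = (K - k') + k'" using k' by simp
    then have "(par ^^ K) ?i = (par ^^ (K - k')) ((par ^^ k') ?i)" by (metis funpow_add comp_apply)
    then have "(par ^^ (K - k')) ((par ^^ k') ?i) = j" using K by simp
    then have d: "desc par ((par ^^ k') ?i) j" unfolding desc_def by blast
    have "(par ^^ k') ?i \<in> {1..m}" using desc_in_rev[OF d assms(1)] .
    then show "?i \<le> (par ^^ k') ?i" using bp(3) d by blast
  qed
  moreover have "par j < ?i" using assms(2) bp(1) by auto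
  ultimately show ?thesis using gap_char K by blast
qed

lemma par_ne_beta: assumes "x \<in> {2..m}" shows "par x \<noteq> beta m par x"
proof
  assume "par x = beta m par x"
  then have "desc par (par x) x" using beta_props(2)[of x] assms by simp
  then show False using par_not_desc assms by blast
qed

lemma D_char: assumes "m \<ge> 1" "x \<in> insert 1 {j\<in>{2..m}. \<not> par j > beta m par j}"
  shows "x \<in> {1..m}" "x = 1 \<or> par x < beta m par x"
proof -
  show "x \<in> {1..m}" using assms by auto
  show "x = 1 \<or> par x < beta m par x"
  proof (cases "x = 1")
    case False
    then have "x \<in> {2..m}" "\<not> par x > beta m par x" using assms by auto
    then show ?thesis using par_ne_beta[of x] by simp
  qed simp
qed

lemma lead_eq: assumes "m \<ge> 1" shows "lead m par = m - impe_C m par"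
proof -
  let ?PR = "{j\<in>{2..m}. \<not> par j > beta m par j}"
  let ?L = "{i\<in>{1..m}. leading m par i}"
  let ?D = "insert 1 ?PR"
  have inj: "inj_on (beta m par) ?D"
  proof (rule inj_onI)
    fix a b assume a: "a \<in> ?D" and b: "b \<in> ?D" and e: "beta m par a = beta m par b"
    have "a = gap_top par (beta m par a)" using gap_beta[OF D_char[OF assms a]] by argo
    also have "\<dots> = gap_top par (beta m par b)" using e by argo
    also have "\<dots> = b" using gap_beta[OF D_char[OF assms b]] by argo
    finally show "a = b" .
  qed
  have img: "beta m par ` ?D = ?L"
  proof (intro equalityI subsetI)
    fix i assume "i \<in> beta m par ` ?D"
    then obtain j where j: "j \<in> ?D" "i = beta m par j" by blast
    note c = D_char[OF assms j(1)]
    have "gap_top par i = j" using gap_beta[OF c] j(2) by argo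
    then have "leading m par i" unfolding leading_def using j(2) by argo
    moreover have "i \<in> {1..m}" using beta_props(1)[OF c(1)] j by simp
    ultimately show "i \<in> ?L" by simp
  next
    fix i assume "i \<in> ?L"
    then have i: "i \<in> {1..m}" "beta m par (gap_top par i) = i" unfolding leading_def by auto
    let ?P = "GP i"
    have bnd: "\<And>y. ?P y \<Longrightarrow> y \<le> dep i"
    proof -
      fix y assume y: "?P y"
      show "y \<le> dep i"
      proof (rule ccontr)
        assume "\<not> y \<le> dep i"
        then have "Suc (dep i) \<le> y" by simp
        then have "i \<le> (par ^^ Suc (dep i)) i" using y by blast
        then show False using dep_props[OF i(1)] i(1) by simp
      qed
    qed
    have P0: "?P 0" by simp
    let ?G = "GREATEST k. ?P k"
    have PG: "?P ?G" using GreatestI_nat[of ?P 0 "dep i"] P0 bnd by blast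
    have nPG: "\<not> ?P (Suc ?G)"
    proof
      assume "?P (Suc ?G)"
      then have "Suc ?G \<le> ?G" using Greatest_le_nat[of ?P "Suc ?G" "dep i"] bnd by blast
      then show False by simp
    qed
    let ?a = "(par ^^ ?G) i"
    have ga: "gap_top par i = ?a" unfolding gap_top_def by simp
    have ai: "i \<le> ?a" using PG by blast
    have pa: "par ?a < i"
    proof -
      obtain k' where k': "k' \<le> Suc ?G" "\<not> i \<le> (par ^^ k') i" using nPG by blast
      have "k' = Suc ?G"
      proof (rule ccontr)
        assume "k' \<noteq> Suc ?G"
        then have "k' \<le> ?G" using k' by simp
        then show False using PG k' by blast
      qed
      then show ?thesis using k' by simp
    qed
    have a1: "?a \<in> {1..m}" using ai i(1) funpow_range[of i ?G] by auto
    have ba: "beta m par ?a = i" using i(2) ga by simp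
    have "?a \<in> ?D"
    proof (cases "?a = 1")
      case True then show ?thesis by simp
    next
      case False
      then have "?a \<in> {2..m}" using a1 by auto
      then show ?thesis using pa ba by simp
    qed
    then show "i \<in> beta m par ` ?D" using ba by (intro image_eqI[of _ _ ?a]) auto
  qed
  have "lead m par = card ?L" unfolding lead_def by simp
  also have "\<dots> = card ?D" using card_image[OF inj] img by simp
  also have "\<dots> = Suc (card ?PR)" by (rule card_insert_disjoint) auto
  also have "card ?PR = card {2..m} - impe_C m par"
  proof -
    let ?IM = "{j\<in>{2..m}. par j > beta m par j}"
    have u: "{2..m} = ?PR \<union> ?IM" by auto
    have "card (?PR \<union> ?IM) = card ?PR + card ?IM" by (rule card_Un_disjoint) auto
    moreover have "card {2..m} = card (?PR \<union> ?IM)" using u by (rule arg_cong[where f = card])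
    ultimately have "card {2..m} = card ?PR + card ?IM" by argo
    then show ?thesis unfolding impe_C_def by simp
  qed
  finally have l: "lead m par = Suc (card {2..m} - impe_C m par)" .
  have "impe_C m par \<le> card {2..m}" unfolding impe_C_def by (rule card_mono) auto
  then show ?thesis using l assms by simp
qed

end


definition PhiF where "PhiF m a = (planar.parN m (fst a) (snd a), planar.Eset m (fst a) (snd a))"
definition PsiF where "PsiF m b = (qtree.pp m (fst b) (snd b), qtree.oo m (fst b) (snd b))"

lemma planar_iff: "a \<in> planar_trees m \<longleftrightarrow> planar m (fst a) (snd a)"
  unfolding planar_trees_def planar_def planar_axioms_def ctree_def by (cases a) auto

lemma qtree_iff: "b \<in> Sigma (cayley_trees m) (\<lambda>T. Pow (IP m T)) \<longleftrightarrow> qtree m (fst b) (snd b)"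
  unfolding cayley_trees_def qtree_def qtree_axioms_def ctree_def by (cases b) auto

lemma Phi_bij: "bij_betw (PhiF m) (planar_trees m) (Sigma (cayley_trees m) (\<lambda>T. Pow (IP m T)))"
proof (rule bij_betw_byWitness[where f' = "PsiF m"])
  show "\<forall>a\<in>planar_trees m. PsiF m (PhiF m a) = a"
  proof
    fix a assume "a \<in> planar_trees m"
    then have p: "planar m (fst a) (snd a)" using planar_iff by blast
    show "PsiF m (PhiF m a) = a"
      unfolding PsiF_def PhiF_def using planar.Psi_Phi[OF p] by (cases a) simp
  qed
  show "\<forall>b\<in>Sigma (cayley_trees m) (\<lambda>T. Pow (IP m T)). PhiF m (PsiF m b) = b"
  proof
    fix b assume "b \<in> Sigma (cayley_trees m) (\<lambda>T. Pow (IP m T))"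
    then have q: "qtree m (fst b) (snd b)" using qtree_iff by blast
    show "PhiF m (PsiF m b) = b"
      unfolding PsiF_def PhiF_def using qtree.Phi_Psi[OF q] by (cases b) simp
  qed
  show "PhiF m ` planar_trees m \<subseteq> Sigma (cayley_trees m) (\<lambda>T. Pow (IP m T))"
  proof
    fix b assume "b \<in> PhiF m ` planar_trees m"
    then obtain a where a: "a \<in> planar_trees m" "b = PhiF m a" by blast
    then have p: "planar m (fst a) (snd a)" using planar_iff by blast
    have "qtree m (fst b) (snd b)" unfolding a PhiF_def qtree_def qtree_axioms_def ctree_def
      using planar.cayley_N[OF p] planar.Eset_IP[OF p] by simp
    then show "b \<in> Sigma (cayley_trees m) (\<lambda>T. Pow (IP m T))" using qtree_iff by blast
  qed
  show "PsiF m ` Sigma (cayley_trees m) (\<lambda>T. Pow (IP m T)) \<subseteq> planar_trees m"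
  proof
    fix a assume "a \<in> PsiF m ` Sigma (cayley_trees m) (\<lambda>T. Pow (IP m T))"
    then obtain b where b: "b \<in> Sigma (cayley_trees m) (\<lambda>T. Pow (IP m T))" "a = PsiF m b" by blast
    then have q: "qtree m (fst b) (snd b)" using qtree_iff by blast
    have "planar m (fst a) (snd a)" unfolding b PsiF_def using qtree.planar_pp[OF q] by simp
    then show "a \<in> planar_trees m" using planar_iff by blast
  qed
qed

lemma finite_cayley: "finite (cayley_trees m)"
proof -
  have inj: "inj_on (\<lambda>f. map f [0..<Suc m]) (cayley_trees m)"
  proof (rule inj_onI)
    fix f g assume f: "f \<in> cayley_trees m" and g: "g \<in> cayley_trees m"
      and e: "map f [0..<Suc m] = map g [0..<Suc m]"
    show "f = g"
    proof
      fix v show "f v = g v"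
      proof (cases "v \<le> m")
        case True
        then have "v \<in> set [0..<Suc m]" by auto
        then show ?thesis using e by (auto simp: map_eq_conv)
      next
        case False
        then have "f v = 0" "g v = 0" using f g unfolding cayley_trees_def is_cayley_def by auto
        then show ?thesis by simp
      qed
    qed
  qed
  have "(\<lambda>f. map f [0..<Suc m]) ` cayley_trees m \<subseteq> {xs. set xs \<subseteq> {0..m} \<and> length xs = Suc m}"
  proof
    fix xs assume "xs \<in> (\<lambda>f. map f [0..<Suc m]) ` cayley_trees m"
    then obtain f where f: "f \<in> cayley_trees m" "xs = map f [0..<Suc m]" by blast
    interpret ctree m f using f unfolding cayley_trees_def by unfold_locales simp
    show "xs \<in> {xs. set xs \<subseteq> {0..m} \<and> length xs = Suc m}" using f par_le by auto
  qed
  moreover have "finite {xs. set xs \<subseteq> {0..m::nat} \<and> length xs = Suc m}"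
    by (rule finite_lists_length_eq) simp
  ultimately have "finite ((\<lambda>f. map f [0..<Suc m]) ` cayley_trees m)" using finite_subset by blast
  then show ?thesis using finite_image_iff[OF inj] by blast
qed

lemma pow_sum: "finite X \<Longrightarrow> (\<Sum>S\<in>Pow X. (t::'a::comm_semiring_1) ^ card S) = (t + 1) ^ card X"
proof -
  assume fX: "finite X"
  have "(\<Prod>x\<in>X. t + 1) = (\<Sum>S\<in>Pow X. (\<Prod>x\<in>S. t) * (\<Prod>x\<in>X - S. 1))"
    by (rule prod_add[OF fX])
  also have "\<dots> = (\<Sum>S\<in>Pow X. t ^ card S)" by simp
  finally show ?thesis by simp
qed

theorem proposition15:
  fixes n :: nat and x y z t :: "'a::comm_ring_1"
  assumes "n > 1"
  shows "(\<Sum>T\<in>cayley_trees (n+1).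
            y ^ impe_C (n+1) T * (t+1) ^ impp_C (n+1) T * x ^ (deg_root (n+1) T - 1)
            * z ^ (lead (n+1) T - deg_root (n+1) T - 1))
       = (\<Sum>(P, ord)\<in>planar_trees (n+1).
            y ^ (impe_O (n+1) P ord + eld (n+1) P ord) * t ^ eld (n+1) P ord
            * x ^ (young_root (n+1) P ord - 1)
            * z ^ (n - impe_O (n+1) P ord - young_root (n+1) P ord - eld (n+1) P ord))"
proof -
  let ?m = "n + 1"
  let ?A = "planar_trees ?m"
  let ?C = "cayley_trees ?m"
  let ?Bs = "Sigma ?C (\<lambda>T. Pow (IP ?m T))"
  define h where "h (b :: (nat \<Rightarrow> nat) \<times> nat set) = y ^ impe_C ?m (fst b) * t ^ card (snd b) * x ^ (deg_root ?m (fst b) - 1)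
      * z ^ (n - impe_C ?m (fst b) - deg_root ?m (fst b))" for b
  let ?g = "\<lambda>(P, ord). y ^ (impe_O ?m P ord + eld ?m P ord) * t ^ eld ?m P ord
            * x ^ (young_root ?m P ord - 1)
            * z ^ (n - impe_O ?m P ord - young_root ?m P ord - eld ?m P ord)"
  have gh: "?g a = h (PhiF ?m a)" if a: "a \<in> ?A" for a
  proof -
    have p: "planar ?m (fst a) (snd a)" using a planar_iff by blast
    have e1: "impe_C ?m (planar.parN ?m (fst a) (snd a)) = impe_O ?m (fst a) (snd a) + eld ?m (fst a) (snd a)"
      using planar.impe_N[OF p] .
    have e2: "deg_root ?m (planar.parN ?m (fst a) (snd a)) = young_root ?m (fst a) (snd a)"
      using planar.deg_N[OF p] .
    have e3: "card (planar.Eset ?m (fst a) (snd a)) = eld ?m (fst a) (snd a)"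
      unfolding planar.Eset_def[OF p] eld_def by simp
    have "n - (impe_O ?m (fst a) (snd a) + eld ?m (fst a) (snd a)) - young_root ?m (fst a) (snd a)
        = n - impe_O ?m (fst a) (snd a) - young_root ?m (fst a) (snd a) - eld ?m (fst a) (snd a)" by simp
    then show ?thesis unfolding h_def PhiF_def using e1 e2 e3 by (cases a) simp
  qed
  have "(\<Sum>a\<in>?A. ?g a) = (\<Sum>a\<in>?A. h (PhiF ?m a))" using gh by (rule sum.cong[OF refl])
  also have "\<dots> = (\<Sum>b\<in>?Bs. h b)" by (rule sum.reindex_bij_betw[OF Phi_bij])
  also have "\<dots> = (\<Sum>(T, S)\<in>?Bs. h (T, S))" by simp
  also have "\<dots> = (\<Sum>T\<in>?C. \<Sum>S\<in>Pow (IP ?m T). h (T, S))"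
  proof (rule sum.Sigma[symmetric])
    show "finite ?C" by (rule finite_cayley)
    show "\<forall>T\<in>?C. finite (Pow (IP ?m T))" unfolding IP_def by simp
  qed
  also have "\<dots> = (\<Sum>T\<in>?C. y ^ impe_C ?m T * (t+1) ^ impp_C ?m T * x ^ (deg_root ?m T - 1)
            * z ^ (lead ?m T - deg_root ?m T - 1))"
  proof (rule sum.cong[OF refl])
    fix T assume T: "T \<in> ?C"
    interpret ctree ?m T using T unfolding cayley_trees_def by unfold_locales simp
    have fin: "finite (IP ?m T)" unfolding IP_def by simp
    have "impe_C ?m T \<le> n"
    proof -
      have "impe_C ?m T \<le> card {2..?m}" unfolding impe_C_def by (rule card_mono) auto
      then show ?thesis by simp
    qed
    then have ex: "lead ?m T - deg_root ?m T - 1 = n - impe_C ?m T - deg_root ?m T"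
      using lead_eq by simp
    have ip: "impp_C ?m T = card (IP ?m T)" unfolding impp_C_def IP_def by simp
    have "(\<Sum>S\<in>Pow (IP ?m T). h (T, S)) = (\<Sum>S\<in>Pow (IP ?m T).
        (y ^ impe_C ?m T * x ^ (deg_root ?m T - 1) * z ^ (n - impe_C ?m T - deg_root ?m T)) * t ^ card S)"
      unfolding h_def by (rule sum.cong[OF refl]) (simp add: mult_ac)
    also have "\<dots> = (y ^ impe_C ?m T * x ^ (deg_root ?m T - 1) * z ^ (n - impe_C ?m T - deg_root ?m T))
        * (\<Sum>S\<in>Pow (IP ?m T). t ^ card S)" by (rule sum_distrib_left[symmetric])
    also have "\<dots> = (y ^ impe_C ?m T * x ^ (deg_root ?m T - 1) * z ^ (n - impe_C ?m T - deg_root ?m T))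
        * (t + 1) ^ card (IP ?m T)" by (simp only: pow_sum[OF fin])
    also have "\<dots> = y ^ impe_C ?m T * (t+1) ^ impp_C ?m T * x ^ (deg_root ?m T - 1)
            * z ^ (lead ?m T - deg_root ?m T - 1)" unfolding ex ip by (simp add: mult_ac)
    finally show "(\<Sum>S\<in>Pow (IP ?m T). h (T, S)) = y ^ impe_C ?m T * (t+1) ^ impp_C ?m T * x ^ (deg_root ?m T - 1)
            * z ^ (lead ?m T - deg_root ?m T - 1)" .
  qed
  finally show ?thesis by simp
qed


end
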